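(* For every integer $k\ge 1$ there exists a $3$-connected nonplanar bipartite cubic graph $G$ with $4k+2$ vertices and $K'(G,3)=2^k$.
   Context: A proper $3$-edge coloring assigns colors from $\{1,2,3\}$ to edges so that adjacent edges receive different colors. For colors $a\neq b$, an edge-Kempe chain is a connected component of the subgraph of edges colored $a$ or $b$; an edge-Kempe switch interchanges $a$ and $b$ on one chain. $K'(G,3)$ is the number of equivalence classes of proper $3$-edge colorings of $G$ under the equivalence relation generated by edge-Kempe switches. *)

theory Defs
  imports "Graph_Theory.Graph_Theory"
begin

text \<open>Simple graphs are symmetric loop-free finite pair digraphs (pair_graph);
 an undirected edge is the two-element set of its ends.\<close>

definition uedges :: "'a pair_pre_digraph \<Rightarrow> 'a set set" where
  "uedges G = {{u, v} | u v. (u, v) \<in> parcs G}"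

definition cubic :: "'a pair_pre_digraph \<Rightarrow> bool" where
  "cubic G \<longleftrightarrow> (\<forall>v \<in> pverts G. out_degree (with_proj G) v = 3)"

definition bipartite :: "'a pair_pre_digraph \<Rightarrow> bool" where
  "bipartite G \<longleftrightarrow> (\<exists>A B. A \<inter> B = {} \<and> A \<union> B = pverts G \<and>
      (\<forall>(u, v) \<in> parcs G. (u \<in> A \<and> v \<in> B) \<or> (u \<in> B \<and> v \<in> A)))"

definition connected_after_removal :: "'a pair_pre_digraph \<Rightarrow> 'a set \<Rightarrow> bool" where
  "connected_after_removal G S \<longleftrightarrow>
     (\<forall>u \<in> pverts G - S. \<forall>v \<in> pverts G - S.
        (u, v) \<in> (parcs G \<inter> ((pverts G - S) \<times> (pverts G - S)))\<^sup>*)"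

definition k_connected :: "nat \<Rightarrow> 'a pair_pre_digraph \<Rightarrow> bool" where
  "k_connected k G \<longleftrightarrow> card (pverts G) > k \<and>
     (\<forall>S \<subseteq> pverts G. card S < k \<longrightarrow> connected_after_removal G S)"

definition edge_3_colorings :: "'a pair_pre_digraph \<Rightarrow> ('a set \<Rightarrow> nat) set" where
  "edge_3_colorings G = {c. (\<forall>e \<in> uedges G. c e \<in> {1, 2, 3}) \<and>
      (\<forall>e. e \<notin> uedges G \<longrightarrow> c e = 0) \<and>
      (\<forall>e \<in> uedges G. \<forall>f \<in> uedges G. e \<noteq> f \<and> e \<inter> f \<noteq> {} \<longrightarrow> c e \<noteq> c f)}"

definition ab_edges :: "'a pair_pre_digraph \<Rightarrow> ('a set \<Rightarrow> nat) \<Rightarrow> nat \<Rightarrow> nat \<Rightarrow> 'a set set" where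
  "ab_edges G c a b = {e \<in> uedges G. c e = a \<or> c e = b}"

text \<open>Edge-Kempe chains: connected components (as edge sets) of the subgraph
 formed by the edges coloured a or b.\<close>

definition kempe_chains :: "'a pair_pre_digraph \<Rightarrow> ('a set \<Rightarrow> nat) \<Rightarrow> nat \<Rightarrow> nat \<Rightarrow> 'a set set set" where
  "kempe_chains G c a b =
     ab_edges G c a b //
       ({(e, f). e \<in> ab_edges G c a b \<and> f \<in> ab_edges G c a b \<and> e \<inter> f \<noteq> {}}\<^sup>*)"

definition kempe_switch :: "('a set \<Rightarrow> nat) \<Rightarrow> nat \<Rightarrow> nat \<Rightarrow> 'a set set \<Rightarrow> ('a set \<Rightarrow> nat)" where
  "kempe_switch c a b C = (\<lambda>e. if e \<in> C then (if c e = a then b else a) else c e)"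

definition kempe_step :: "'a pair_pre_digraph \<Rightarrow> (('a set \<Rightarrow> nat) \<times> ('a set \<Rightarrow> nat)) set" where
  "kempe_step G = {(c, c'). c \<in> edge_3_colorings G \<and>
      (\<exists>a b C. a \<in> {1, 2, 3} \<and> b \<in> {1, 2, 3} \<and> a \<noteq> b \<and>
         C \<in> kempe_chains G c a b \<and> c' = kempe_switch c a b C)}"

definition kempe_classes_count :: "'a pair_pre_digraph \<Rightarrow> nat" where
  "kempe_classes_count G =
     card (edge_3_colorings G // ((kempe_step G \<union> (kempe_step G)\<inverse>)\<^sup>*))"

end

theory Submission
  imports Defs
begin


lemma pair_graphI':
  assumes "finite (pverts G)"
    and "\<And>u v. (u,v) \<in> parcs G \<Longrightarrow> u \<in> pverts G \<and> v \<in> pverts G \<and> u \<noteq> v \<and> (v,u) \<in> parcs G"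
  shows "pair_graph G"
proof
  show "finite (pverts G)" by fact
  have "parcs G \<subseteq> pverts G \<times> pverts G" using assms(2) by auto
  then show "finite (parcs G)" using assms(1) by (meson finite_SigmaI finite_subset)
  fix e assume "e \<in> parcs G"
  then show "fst e \<in> pverts G" "snd e \<in> pverts G" "fst e \<noteq> snd e" using assms(2)[of "fst e" "snd e"] by auto
next
  show "symmetric G" unfolding symmetric_def arcs_ends_def sym_def using assms(2) by (auto simp: arc_to_ends_def)
qed

lemma lt3: "(i::nat) < 3 \<longleftrightarrow> i = 0 \<or> i = 1 \<or> i = 2" by auto

definition tv :: "nat \<Rightarrow> nat \<Rightarrow> nat" where "tv j i = 3*j+i"
definition cv :: "nat \<Rightarrow> nat \<Rightarrow> nat" where "cv k j = 3*k+j"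
definition pv :: "nat \<Rightarrow> nat" where "pv k = 4*k"
definition qv :: "nat \<Rightarrow> nat" where "qv k = 4*k+1"

definition E0 :: "nat \<Rightarrow> (nat \<times> nat) set" where
  "E0 k = {(tv j i, tv (Suc j) i) | j i. Suc j < k \<and> i < 3} \<union> {(tv j i, cv k j) | j i. j < k \<and> i < 3}
     \<union> {(tv 0 i, pv k) | i. i < 3} \<union> {(tv (k-1) i, qv k) | i. i < 3}"

definition nv :: "nat \<Rightarrow> nat" where "nv k = 4*k+2"

definition GG :: "nat \<Rightarrow> nat pair_pre_digraph" where
  "GG k = \<lparr>pverts = {..<nv k}, parcs = E0 k \<union> (E0 k)\<inverse>\<rparr>"

locale L = fixes k :: nat assumes k1: "1 \<le> k"
begin

abbreviation "c \<equiv> cv k"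
abbreviation "p \<equiv> pv k"
abbreviation "q \<equiv> qv k"
abbreviation "G \<equiv> GG k"

lemma tv_inj[simp]: "i < 3 \<Longrightarrow> i' < 3 \<Longrightarrow> tv j i = tv j' i' \<longleftrightarrow> j = j' \<and> i = i'"
  unfolding tv_def by presburger
lemma tv_lt: "j < k \<Longrightarrow> i < 3 \<Longrightarrow> tv j i < 3*k"
  unfolding tv_def by linarith
lemma cv_inj[simp]: "c j = c j' \<longleftrightarrow> j = j'" unfolding cv_def by simp
lemma tv_cv[simp]: "j < k \<Longrightarrow> i < 3 \<Longrightarrow> tv j i \<noteq> c j'" "j < k \<Longrightarrow> i < 3 \<Longrightarrow> c j' \<noteq> tv j i"
  unfolding tv_def cv_def by linarith+
lemma tv_p[simp]: "j < k \<Longrightarrow> i < 3 \<Longrightarrow> tv j i \<noteq> p" "j < k \<Longrightarrow> i < 3 \<Longrightarrow> p \<noteq> tv j i"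
  unfolding tv_def pv_def by linarith+
lemma tv_q[simp]: "j < k \<Longrightarrow> i < 3 \<Longrightarrow> tv j i \<noteq> q" "j < k \<Longrightarrow> i < 3 \<Longrightarrow> q \<noteq> tv j i"
  unfolding tv_def qv_def by linarith+
lemma cv_p[simp]: "j < k \<Longrightarrow> c j \<noteq> p" "j < k \<Longrightarrow> p \<noteq> c j"
  unfolding cv_def pv_def by linarith+
lemma cv_q[simp]: "j < k \<Longrightarrow> c j \<noteq> q" "j < k \<Longrightarrow> q \<noteq> c j"
  unfolding cv_def qv_def by linarith+
lemma p_q[simp]: "p \<noteq> q" "q \<noteq> p" unfolding pv_def qv_def by auto

lemma verts_cases:
  assumes "v < nv k"
  obtains (T) j i where "j < k" "i < 3" "v = tv j i" | (C) j where "j < k" "v = c j" | (P) "v = p" | (Q) "v = q"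
proof -
  consider "v < 3*k" | "3*k \<le> v" "v < 4*k" | "v = 4*k" | "v = 4*k+1" using assms unfolding nv_def by linarith
  then show ?thesis
  proof cases
    case 1 then show ?thesis using T[of "v div 3" "v mod 3"] unfolding tv_def by (metis div_mult_mod_eq less_mult_imp_div_less mod_less_divisor mult.commute zero_less_numeral)
  next
    case 2 then show ?thesis using C[of "v - 3*k"] unfolding cv_def by auto
  qed (auto simp: pv_def qv_def intro: P Q)
qed

lemma verts_G: "pverts G = {..<nv k}" by (simp add: GG_def)
lemma arcs_G: "parcs G = E0 k \<union> (E0 k)\<inverse>" by (simp add: GG_def)

lemma tv_in: "j < k \<Longrightarrow> i < 3 \<Longrightarrow> tv j i < nv k" using tv_lt unfolding nv_def by fastforce
lemma cv_in: "j < k \<Longrightarrow> c j < nv k" unfolding cv_def nv_def by linarith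
lemma p_in: "p < nv k" unfolding pv_def nv_def by linarith
lemma q_in: "q < nv k" unfolding qv_def nv_def by linarith

lemma E0_iff: "(x,y) \<in> E0 k \<longleftrightarrow> (\<exists>j i. Suc j<k \<and> i<3 \<and> x=tv j i \<and> y=tv (Suc j) i) \<or> (\<exists>j i. j<k \<and> i<3 \<and> x=tv j i \<and> y = c j)
   \<or> (\<exists>i<3. x=tv 0 i \<and> y=p) \<or> (\<exists>i<3. x = tv (k-1) i \<and> y = q)"
  by (auto simp: E0_def)

lemma arc_tv: assumes "j < k" "i < 3" shows "(tv j i, w) \<in> parcs G \<longleftrightarrow>
   w = c j \<or> (j = 0 \<and> w = p) \<or> (0 < j \<and> w = tv (j-1) i) \<or> (j = k-1 \<and> w = q) \<or> (Suc j < k \<and> w = tv (Suc j) i)"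
proof -
  have A: "(tv j i, w) \<in> E0 k \<longleftrightarrow> w = c j \<or> (j = 0 \<and> w = p) \<or> (j = k-1 \<and> w = q) \<or> (Suc j < k \<and> w = tv (Suc j) i)"
    unfolding E0_iff using assms by auto
  have B: "(w, tv j i) \<in> E0 k \<longleftrightarrow> (0 < j \<and> w = tv (j-1) i)"
  proof
    assume "(w, tv j i) \<in> E0 k"
    then show "0 < j \<and> w = tv (j-1) i" unfolding E0_iff using assms by auto
  next
    assume "0 < j \<and> w = tv (j-1) i"
    then show "(w, tv j i) \<in> E0 k" unfolding E0_iff using assms
      by (intro disjI1 exI[of _ "j-1"] exI[of _ i]) auto
  qed
  show ?thesis unfolding arcs_G using A B by auto
qed

lemma arc_cv: assumes "j < k" shows "(c j, w) \<in> parcs G \<longleftrightarrow> (\<exists>i<3. w = tv j i)"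
  unfolding arcs_G by (simp only: Un_iff converse_iff E0_iff) (use assms in \<open>auto simp: tv_lt\<close>)

lemma arc_p: "(p, w) \<in> parcs G \<longleftrightarrow> (\<exists>i<3. w = tv 0 i)"
  unfolding arcs_G by (simp only: Un_iff converse_iff E0_iff) (use k1 in auto)

lemma arc_q: "(q, w) \<in> parcs G \<longleftrightarrow> (\<exists>i<3. w = tv (k-1) i)"
  unfolding arcs_G by (simp only: Un_iff converse_iff E0_iff) (use k1 in auto)


lemma arcs_basic:
  "j < k \<Longrightarrow> i < 3 \<Longrightarrow> (tv j i, c j) \<in> parcs G"
  "j < k \<Longrightarrow> i < 3 \<Longrightarrow> (c j, tv j i) \<in> parcs G"
  "i < 3 \<Longrightarrow> (tv 0 i, p) \<in> parcs G"
  "i < 3 \<Longrightarrow> (p, tv 0 i) \<in> parcs G"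
  "i < 3 \<Longrightarrow> (tv (k-1) i, q) \<in> parcs G"
  "i < 3 \<Longrightarrow> (q, tv (k-1) i) \<in> parcs G"
  "Suc j < k \<Longrightarrow> i < 3 \<Longrightarrow> (tv j i, tv (Suc j) i) \<in> parcs G"
  "Suc j < k \<Longrightarrow> i < 3 \<Longrightarrow> (tv (Suc j) i, tv j i) \<in> parcs G"
  unfolding arcs_G E0_def by blast+

definition up :: "nat \<Rightarrow> nat \<Rightarrow> nat" where "up j i = (if j = 0 then p else tv (j-1) i)"
definition dn :: "nat \<Rightarrow> nat \<Rightarrow> nat" where "dn j i = (if Suc j = k then q else tv (Suc j) i)"

lemma arc_tv': assumes "j < k" "i < 3" shows "(tv j i, w) \<in> parcs G \<longleftrightarrow> w \<in> {c j, up j i, dn j i}"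
  unfolding arc_tv[OF assms] up_def dn_def using assms by auto

lemma up_dn_distinct: assumes "j < k" "i < 3"
  shows "c j \<noteq> up j i" "c j \<noteq> dn j i" "up j i \<noteq> dn j i"
  using assms unfolding up_def dn_def by auto

lemma E0_props: "(x,y) \<in> E0 k \<Longrightarrow> x < nv k \<and> y < nv k \<and> x \<noteq> y"
  unfolding E0_iff using k1 by (auto simp: tv_in cv_in p_in q_in)

lemma pair_graph_G: "pair_graph G"
  by (rule pair_graphI') (auto simp: verts_G arcs_G dest: E0_props)

lemma arc_in: "(u,v) \<in> parcs G \<Longrightarrow> u < nv k \<and> v < nv k \<and> u \<noteq> v"
  unfolding arcs_G by (auto dest: E0_props)

lemma arc_sym: "(u,v) \<in> parcs G \<Longrightarrow> (v,u) \<in> parcs G"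
  unfolding arcs_G by auto

definition nb :: "nat \<Rightarrow> nat set" where "nb v = {w. (v,w) \<in> parcs G}"

lemma card_nb: assumes "v < nv k" shows "card (nb v) = 3"
  using assms
proof (cases rule: verts_cases)
  case (T j i)
  then have "nb v = {c j, up j i, dn j i}" unfolding nb_def using arc_tv' by auto
  then show ?thesis using up_dn_distinct[OF T(1,2)] by simp
next
  case (C j)
  then have "nb v = {tv j 0, tv j 1, tv j 2}" unfolding nb_def using arc_cv
    by (auto simp: less_Suc_eq numeral_3_eq_3)
  then show ?thesis by simp
next
  case P
  then have "nb v = {tv 0 0, tv 0 1, tv 0 2}" unfolding nb_def using arc_p
    by (auto simp: less_Suc_eq numeral_3_eq_3)
  then show ?thesis by simp
next
  case Q
  then have "nb v = {tv (k-1) 0, tv (k-1) 1, tv (k-1) 2}" unfolding nb_def using arc_q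
    by (auto simp: less_Suc_eq numeral_3_eq_3)
  then show ?thesis by simp
qed

lemma cubic_G: "cubic G"
  unfolding cubic_def
proof
  fix v assume v: "v \<in> pverts G"
  have "out_arcs (with_proj G) v = Pair v ` nb v"
    unfolding out_arcs_def nb_def by auto
  then have "out_degree (with_proj G) v = card (nb v)"
    unfolding out_degree_def by (simp add: card_image inj_on_def)
  then show "out_degree (with_proj G) v = 3" using card_nb v by (simp add: verts_G)
qed

definition side :: "nat \<Rightarrow> bool" where
  "side v = (if v < 3*k then even (v div 3) else if v < 4*k then odd (v - 3*k) else if v = 4*k then False else odd (k-1))"

lemma side_tv: "j < k \<Longrightarrow> i < 3 \<Longrightarrow> side (tv j i) = even j"
  unfolding side_def using tv_lt by (simp add: tv_def)
lemma side_cv: "j < k \<Longrightarrow> side (c j) = odd j"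
  unfolding side_def by (simp add: cv_def)
lemma side_p: "side p = False" unfolding side_def pv_def by simp
lemma side_q: "side q = odd (k-1)" unfolding side_def qv_def by simp

lemma bipartite_G: "bipartite G"
proof -
  let ?A = "{v \<in> pverts G. side v}"
  let ?B = "{v \<in> pverts G. \<not> side v}"
  have E: "(x,y) \<in> E0 k \<Longrightarrow> side x \<noteq> side y" for x y
    unfolding E0_iff using k1
    by (auto simp: side_tv side_cv side_p side_q) 
  have "\<forall>(u, v)\<in>parcs G. (u \<in> ?A \<and> v \<in> ?B) \<or> (u \<in> ?B \<and> v \<in> ?A)"
    using E arc_in by (fastforce simp: verts_G arcs_G)
  then show ?thesis unfolding bipartite_def by (intro exI[of _ ?A] exI[of _ ?B]) auto
qed

lemma card_G: "card (pverts G) = 4*k+2" by (simp add: verts_G nv_def)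

end


context L begin

definition RR :: "nat set \<Rightarrow> (nat \<times> nat) set" where
  "RR S = parcs G \<inter> ((pverts G - S) \<times> (pverts G - S))"

lemma RR_edge: "(u,v) \<in> parcs G \<Longrightarrow> u \<notin> S \<Longrightarrow> v \<notin> S \<Longrightarrow> (u,v) \<in> (RR S)\<^sup>*"
  using arc_in[of u v] by (intro r_into_rtrancl) (auto simp: RR_def verts_G)

lemma RR_sym: "(u,v) \<in> (RR S)\<^sup>* \<Longrightarrow> (v,u) \<in> (RR S)\<^sup>*"
proof -
  have "sym (RR S)" unfolding RR_def sym_def using arc_sym by auto
  then have "sym ((RR S)\<^sup>*)" by (rule sym_rtrancl)
  then show "(u,v) \<in> (RR S)\<^sup>* \<Longrightarrow> (v,u) \<in> (RR S)\<^sup>*" by (auto simp: sym_def)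
qed

lemma col_reach: assumes "i < 3" "b < k" "a \<le> b" "\<And>j. a \<le> j \<Longrightarrow> j \<le> b \<Longrightarrow> tv j i \<notin> S"
  shows "(tv a i, tv b i) \<in> (RR S)\<^sup>*"
  using assms(2-4)
proof (induction b)
  case 0 then show ?case by simp
next
  case (Suc b)
  show ?case
  proof (cases "a = Suc b")
    case True then show ?thesis by simp
  next
    case False
    then have "(tv a i, tv b i) \<in> (RR S)\<^sup>*" using Suc by auto
    moreover have "(tv b i, tv (Suc b) i) \<in> (RR S)\<^sup>*"
      using Suc.prems False assms(1) by (intro RR_edge) (auto simp: arc_tv)
    ultimately show ?thesis by (rule rtrancl_trans)
  qed
qed

lemma intact_col: assumes "S \<subseteq> pverts G" "card S < 3"
  obtains i where "i < 3" "\<And>j. tv j i \<notin> S"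
proof -
  have fin: "finite S" using assms(1) finite_subset by (auto simp: verts_G)
  have "card ((\<lambda>v. v mod 3) ` S) \<le> card S" using fin by (rule card_image_le)
  have "\<not> {0,1,2::nat} \<subseteq> (\<lambda>v. v mod 3) ` S"
  proof
    assume sub: "{0,1,2::nat} \<subseteq> (\<lambda>v. v mod 3) ` S"
    have "card {0,1,2::nat} \<le> card ((\<lambda>v. v mod 3) ` S)" using card_mono[OF finite_imageI[OF fin] sub] .
    then show False using \<open>card ((\<lambda>v. v mod 3) ` S) \<le> card S\<close> assms(2) by simp
  qed
  moreover have "0 < (3::nat)" "1 < (3::nat)" "2 < (3::nat)" by simp_all
  ultimately obtain i where i: "i < 3" "i \<notin> (\<lambda>v. v mod 3) ` S" by blast
  have "tv j i \<notin> S" for j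
  proof
    assume "tv j i \<in> S"
    then have "tv j i mod 3 \<in> (\<lambda>v. v mod 3) ` S" by auto
    moreover have "tv j i mod 3 = i" using i(1) unfolding tv_def by simp
    ultimately show False using i(2) by simp
  qed
  then show ?thesis using that i(1) by blast
qed

lemma conn_G: "k_connected 3 G"
  unfolding k_connected_def
proof (intro conjI allI impI)
  show "3 < card (pverts G)" using card_G k1 by simp
next
  fix S assume S: "S \<subseteq> pverts G" "card S < 3"
  obtain i0 where i0: "i0 < 3" "\<And>j. tv j i0 \<notin> S" using intact_col[OF S] by blast
  let ?b = "tv 0 i0"
  have colb: "(?b, tv j i0) \<in> (RR S)\<^sup>*" if "j < k" for j
    using col_reach[of i0 j 0 S] i0 that by auto
  have all: "(?b, u) \<in> (RR S)\<^sup>*" if u: "u \<in> pverts G - S" for u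
  proof -
    have uV: "u < nv k" using u by (simp add: verts_G)
    then show ?thesis
    proof (cases rule: verts_cases)
      case (T j i)
      show ?thesis
      proof (cases "i = i0")
        case True then show ?thesis using colb T by simp
      next
        case ne: False
        show ?thesis
        proof (cases "c j \<in> S")
          case False
          have "(tv j i0, c j) \<in> (RR S)\<^sup>*" using T False i0 by (intro RR_edge) (auto simp: arc_tv)
          moreover have "(c j, u) \<in> (RR S)\<^sup>*" using T False u by (intro RR_edge) (auto simp: arc_cv)
          ultimately show ?thesis using colb[OF T(1)] by (meson rtrancl_trans)
        next
          case cS: True
          show ?thesis
          proof (cases "p \<notin> S \<and> (\<forall>j'\<le>j. tv j' i \<notin> S)")
            case True
            have "(?b, p) \<in> (RR S)\<^sup>*" using True i0 arc_sym[of p ?b] arc_p by (intro RR_edge) auto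
            moreover have "(p, tv 0 i) \<in> (RR S)\<^sup>*" using True T by (intro RR_edge) (auto simp: arc_p)
            moreover have "(tv 0 i, tv j i) \<in> (RR S)\<^sup>*" using True T by (intro col_reach) auto
            ultimately show ?thesis using T by (meson rtrancl_trans)
          next
            case False
            then obtain s where s: "s \<in> S" "s = p \<or> (\<exists>j'\<le>j. s = tv j' i)" by auto
            have sc: "s \<noteq> c j" using s T by auto
            have su: "s \<noteq> u" using s u by auto
            have Ssub: "S \<subseteq> {c j, s}"
            proof
              fix x assume x: "x \<in> S"
              show "x \<in> {c j, s}"
              proof (rule ccontr)
                assume "x \<notin> {c j, s}"
                then have "card {x, c j, s} = 3" using sc by auto
                moreover have "card {x, c j, s} \<le> card S"
                  using x cS s(1) S(1) by (intro card_mono) (auto intro: finite_subset simp: verts_G)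
                ultimately show False using S(2) by simp
              qed
            qed
            have down: "tv j' i \<notin> S" if "j \<le> j'" "j' < k" for j'
            proof
              assume "tv j' i \<in> S"
              then have "tv j' i = s" using Ssub T that by auto
              then show False using s(2) su T that by auto
            qed
            have qS: "q \<notin> S" using Ssub s(2) T by auto
            have "(tv j i, tv (k-1) i) \<in> (RR S)\<^sup>*" using T down by (intro col_reach) auto
            moreover have "(tv (k-1) i, q) \<in> (RR S)\<^sup>*" using T down qS k1 arc_sym[of q "tv (k-1) i"] arc_q by (intro RR_edge) auto
            moreover have "(q, tv (k-1) i0) \<in> (RR S)\<^sup>*" using qS i0 by (intro RR_edge) (auto simp: arc_q)
            ultimately have "(u, tv (k-1) i0) \<in> (RR S)\<^sup>*" using T by (meson rtrancl_trans)
            then show ?thesis using colb[of "k-1"] k1 RR_sym by (meson diff_less rtrancl_trans zero_less_one less_le_trans)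
          qed
        qed
      qed
    next
      case (C j)
      have "(tv j i0, u) \<in> (RR S)\<^sup>*" using C u i0 arc_tv[of j i0 "c j"] by (intro RR_edge) auto
      then show ?thesis using colb[OF C(1)] by (meson rtrancl_trans)
    next
      case P
      show ?thesis using P u i0 arcs_basic by (intro RR_edge) auto
    next
      case Q
      have "(tv (k-1) i0, u) \<in> (RR S)\<^sup>*" using Q u i0 arcs_basic(5)[of i0] by (intro RR_edge) auto
      then show ?thesis using colb[of "k-1"] k1 by (meson diff_less rtrancl_trans zero_less_one less_le_trans)
    qed
  qed
  show "connected_after_removal G S"
    unfolding connected_after_removal_def
  proof (intro ballI)
    fix u v assume "u \<in> pverts G - S" "v \<in> pverts G - S"
    then have "(u, v) \<in> (RR S)\<^sup>*" using all RR_sym by (meson rtrancl_trans)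
    then show "(u, v) \<in> (parcs G \<inter> (pverts G - S) \<times> (pverts G - S))\<^sup>*" by (simp add: RR_def)
  qed
qed

end


context L begin

definition HV :: "(nat \<Rightarrow> nat) \<Rightarrow> nat set" where
  "HV d = {p, c 0, q} \<union> {tv j i | j i. i < 3 \<and> j \<le> d i}"
definition HA0 :: "(nat \<Rightarrow> nat) \<Rightarrow> (nat \<times> nat) set" where
  "HA0 d = {(tv 0 i, p) | i. i < 3} \<union> {(tv 0 i, c 0) | i. i < 3}
     \<union> {(tv j i, tv (Suc j) i) | j i. i < 3 \<and> j < d i} \<union> {(tv (d i) i, q) | i. i < 3}"
definition Hd :: "(nat \<Rightarrow> nat) \<Rightarrow> nat pair_pre_digraph" where
  "Hd d = \<lparr>pverts = HV d, parcs = HA0 d \<union> (HA0 d)\<inverse>\<rparr>"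

definition ok :: "(nat \<Rightarrow> nat) \<Rightarrow> bool" where "ok d \<longleftrightarrow> (\<forall>i<3. d i < k)"

lemma HV_iff: "x \<in> HV d \<longleftrightarrow> x = p \<or> x = c 0 \<or> x = q \<or> (\<exists>j i. i < 3 \<and> j \<le> d i \<and> x = tv j i)"
  unfolding HV_def by auto

lemma HA0_iff: "(x,y) \<in> HA0 d \<longleftrightarrow> (\<exists>i<3. x = tv 0 i \<and> y = p) \<or> (\<exists>i<3. x = tv 0 i \<and> y = c 0)
   \<or> (\<exists>j i. i < 3 \<and> j < d i \<and> x = tv j i \<and> y = tv (Suc j) i) \<or> (\<exists>i<3. x = tv (d i) i \<and> y = q)"
  unfolding HA0_def by auto

lemma tv_HV: "i < 3 \<Longrightarrow> j \<le> d i \<Longrightarrow> tv j i \<in> HV d"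
  unfolding HV_def by blast

lemma HA0_props: assumes "ok d" "(x,y) \<in> HA0 d" shows "x \<in> HV d \<and> y \<in> HV d \<and> x \<noteq> y"
proof -
  have k0: "0 < k" using k1 by simp
  from assms(2) show ?thesis unfolding HA0_iff
  proof (elim disjE exE conjE)
    fix i assume "i < 3" "x = tv 0 i" "y = p" then show ?thesis using k0 by (auto simp: HV_iff)
  next
    fix i assume "i < 3" "x = tv 0 i" "y = c 0" then show ?thesis using k0 by (auto simp: HV_iff)
  next
    fix j i assume "i < 3" "j < d i" "x = tv j i" "y = tv (Suc j) i" then show ?thesis using tv_HV[of i j d] tv_HV[of i "Suc j" d] by auto
  next
    fix i assume "i < 3" "x = tv (d i) i" "y = q" then show ?thesis using assms(1) by (auto simp: HV_iff ok_def)
  qed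
qed

lemma HV_finite: "finite (HV d)"
proof -
  have "{tv j i | j i. i < 3 \<and> j \<le> d i} \<subseteq> (\<lambda>(j,i). tv j i) ` ({..d 0 + d 1 + d 2} \<times> {..<3})"
  proof
    fix x assume "x \<in> {tv j i | j i. i < 3 \<and> j \<le> d i}"
    then obtain j i where "i < 3" "j \<le> d i" "x = tv j i" by auto
    moreover have "d i \<le> d 0 + d 1 + d 2"
    proof -
      have "i = 0 \<or> i = 1 \<or> i = 2" using \<open>i < 3\<close> by auto
      then show ?thesis by auto
    qed
    ultimately show "x \<in> (\<lambda>(j,i). tv j i) ` ({..d 0 + d 1 + d 2} \<times> {..<3})" by force
  qed
  then show ?thesis unfolding HV_def by (meson finite_Un finite_SigmaI finite_atMost finite_lessThan finite_imageI finite_insert finite.emptyI finite_subset)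
qed

lemma pg_Hd: "ok d \<Longrightarrow> pair_graph (Hd d)"
  by (rule pair_graphI') (auto simp: Hd_def HV_finite dest: HA0_props)

lemma H0_K33: "K\<^bsub>3,3\<^esub> (with_proj (Hd (\<lambda>_. 0)))"
proof -
  have k0: "0 < k" using k1 by simp
  let ?U = "{p, c 0, q}" let ?V = "{tv 0 0, tv 0 1, tv 0 2}"
  have V: "HV (\<lambda>_. 0) = ?U \<union> ?V" unfolding HV_iff set_eq_iff by (auto simp: less_Suc_eq numeral_3_eq_3)
  have s3: "{f i | i. i < (3::nat)} = {f 0, f 1, f 2}" for f :: "nat \<Rightarrow> nat \<times> nat"
    unfolding lt3 by blast
  have "HA0 (\<lambda>_. 0) = {(tv 0 i, p) | i. i < 3} \<union> {(tv 0 i, c 0) | i. i < 3} \<union> {(tv 0 i, q) | i. i < 3}"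
    unfolding HA0_def by auto
  also have "\<dots> = ?V \<times> ?U" unfolding s3 by blast
  finally have A: "HA0 (\<lambda>_. 0) \<union> (HA0 (\<lambda>_. 0))\<inverse> = ?U \<times> ?V \<union> ?V \<times> ?U" by blast
  have I: "?U \<inter> ?V = {}" using k0 by auto
  have cU: "card ?U = 3" using k0 by simp
  have cV: "card ?V = 3" by simp
  have H: "pverts (Hd (\<lambda>_. 0)) = ?U \<union> ?V \<and> ?U \<inter> ?V = {} \<and> card ?U = 3 \<and> card ?V = 3 \<and> parcs (Hd (\<lambda>_. 0)) = ?U \<times> ?V \<union> ?V \<times> ?U"
    unfolding Hd_def pre_digraph.simps pair_pre_digraph.simps using V A I cU cV by (simp only: simp_thms)
  have fin: "finite (pverts (Hd (\<lambda>_. 0)))" by (simp add: Hd_def HV_finite)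
  show ?thesis unfolding complete_bipartite_digraph_pair_def
    apply (rule conjI[OF fin])
    apply (rule exI[of _ ?U])
    apply (rule exI[of _ ?V])
    by (rule H)
qed

definition PCA :: "(nat \<times> nat) set" where "PCA = {(tv 0 i, p) | i. i < 3} \<union> {(tv 0 i, c 0) | i. i < 3}"
definition VA :: "(nat \<Rightarrow> nat) \<Rightarrow> (nat \<times> nat) set" where "VA d = {(tv j i, tv (Suc j) i) | j i. i < 3 \<and> j < d i}"
definition QA :: "(nat \<Rightarrow> nat) \<Rightarrow> (nat \<times> nat) set" where "QA d = {(tv (d i) i, q) | i. i < 3}"

lemma HA0_split: "HA0 d = PCA \<union> VA d \<union> QA d"
  unfolding HA0_def PCA_def VA_def QA_def by blast

lemma VA_upd: "i0 < 3 \<Longrightarrow> VA (d(i0 := Suc (d i0))) = insert (tv (d i0) i0, tv (Suc (d i0)) i0) (VA d)"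
proof (rule set_eqI)
  fix x assume i0: "i0 < 3"
  let ?d = "d(i0 := Suc (d i0))"
  show "x \<in> VA ?d \<longleftrightarrow> x \<in> insert (tv (d i0) i0, tv (Suc (d i0)) i0) (VA d)"
  proof
    assume "x \<in> VA ?d"
    then obtain j i where ji: "i < 3" "j < ?d i" "x = (tv j i, tv (Suc j) i)" unfolding VA_def by blast
    show "x \<in> insert (tv (d i0) i0, tv (Suc (d i0)) i0) (VA d)"
    proof (cases "i = i0 \<and> j = d i0")
      case True then show ?thesis using ji by simp
    next
      case False
      then have "j < d i" using ji by (auto split: if_splits)
      then show ?thesis using ji unfolding VA_def by blast
    qed
  next
    assume "x \<in> insert (tv (d i0) i0, tv (Suc (d i0)) i0) (VA d)"
    then consider "x = (tv (d i0) i0, tv (Suc (d i0)) i0)" | j i where "i < 3" "j < d i" "x = (tv j i, tv (Suc j) i)"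
      unfolding VA_def by blast
    then show "x \<in> VA ?d"
    proof cases
      case 1 then show ?thesis using i0 unfolding VA_def by (intro CollectI exI[of _ "d i0"] exI[of _ i0]) simp
    next
      case (2 j i)
      have "j < ?d i" using 2 by auto
      then show ?thesis using 2 unfolding VA_def by blast
    qed
  qed
qed

lemma QA_upd: assumes "i0 < 3"
  shows "QA (d(i0 := Suc (d i0))) = insert (tv (Suc (d i0)) i0, q) (QA d - {(tv (d i0) i0, q)})"
proof (rule set_eqI)
  fix x show "x \<in> QA (d(i0 := Suc (d i0))) \<longleftrightarrow> x \<in> insert (tv (Suc (d i0)) i0, q) (QA d - {(tv (d i0) i0, q)})"
  proof
    assume "x \<in> QA (d(i0 := Suc (d i0)))"
    then obtain i where i: "i < 3" "x = (tv ((d(i0 := Suc (d i0))) i) i, q)" unfolding QA_def by blast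
    show "x \<in> insert (tv (Suc (d i0)) i0, q) (QA d - {(tv (d i0) i0, q)})"
    proof (cases "i = i0")
      case True then show ?thesis using i by simp
    next
      case False
      then have "x = (tv (d i) i, q)" using i by simp
      moreover have "tv (d i) i \<noteq> tv (d i0) i0" using False i(1) assms by simp
      ultimately show ?thesis using i(1) unfolding QA_def by auto
    qed
  next
    assume "x \<in> insert (tv (Suc (d i0)) i0, q) (QA d - {(tv (d i0) i0, q)})"
    then consider "x = (tv (Suc (d i0)) i0, q)" | i where "i < 3" "x = (tv (d i) i, q)" "x \<noteq> (tv (d i0) i0, q)"
      unfolding QA_def by blast
    then show "x \<in> QA (d(i0 := Suc (d i0)))"
    proof cases
      case 1 then show ?thesis using assms unfolding QA_def by (intro CollectI exI[of _ i0]) simp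
    next
      case (2 i)
      then have "i \<noteq> i0" by auto
      then show ?thesis using 2 unfolding QA_def by (intro CollectI exI[of _ i]) simp
    qed
  qed
qed

lemma set_aux: "u \<notin> A \<Longrightarrow> u \<notin> B \<Longrightarrow> A \<union> insert a B \<union> insert b (C - {u}) = (A \<union> B \<union> C - {u}) \<union> {a,b}"
  by auto

lemma HA0_upd: assumes "ok d" "i0 < 3" "Suc (d i0) < k"
  shows "HA0 (d(i0 := Suc (d i0))) = (HA0 d - {(tv (d i0) i0, q)}) \<union> {(tv (d i0) i0, tv (Suc (d i0)) i0), (tv (Suc (d i0)) i0, q)}"
proof -
  have k0: "0 < k" using k1 by simp
  have "(tv (d i0) i0, q) \<notin> PCA" unfolding PCA_def using k0 by auto
  moreover have "(tv (d i0) i0, q) \<notin> VA d"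
  proof
    assume "(tv (d i0) i0, q) \<in> VA d"
    then obtain j i where ji: "i < 3" "j < d i" "q = tv (Suc j) i" unfolding VA_def by blast
    have "d i < k" using ji(1) assms(1) unfolding ok_def by blast
    then have "Suc j < k" using ji(2) by linarith
    then show False using ji tv_q by metis
  qed
  ultimately show ?thesis unfolding HA0_split VA_upd[OF assms(2)] QA_upd[OF assms(2)] by (rule set_aux)
qed

lemma HV_upd: assumes "i0 < 3" shows "HV (d(i0 := Suc (d i0))) = HV d \<union> {tv (Suc (d i0)) i0}"
  unfolding HV_def using assms by (auto simp: le_Suc_eq split: if_splits)

lemma q_not_fst: "ok d \<Longrightarrow> (q, x) \<notin> HA0 d"
  unfolding HA0_iff ok_def using k1
  by (auto dest: tv_q(1)[rotated])

lemma set_aux2: "(q,u) \<notin> H \<Longrightarrow> (H \<union> H\<inverse> - {(u,q),(q,u)}) \<union> {(u,w),(w,u),(w,q),(q,w)}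
   = ((H - {(u,q)}) \<union> {(u,w),(w,q)}) \<union> ((H - {(u,q)}) \<union> {(u,w),(w,q)})\<inverse>"
  by auto

lemma Hd_subdiv: assumes "ok d" "i0 < 3" "Suc (d i0) < k"
  shows "subdivide (Hd d) (tv (d i0) i0, q) (tv (Suc (d i0)) i0) = Hd (d(i0 := Suc (d i0)))"
proof -
  have "parcs (subdivide (Hd d) (tv (d i0) i0, q) (tv (Suc (d i0)) i0)) = parcs (Hd (d(i0 := Suc (d i0))))"
    unfolding arcs_subdivide unfolding Hd_def pair_pre_digraph.simps HA0_upd[OF assms]
    by (rule set_aux2) (rule q_not_fst[OF assms(1)])
  moreover have "pverts (subdivide (Hd d) (tv (d i0) i0, q) (tv (Suc (d i0)) i0)) = pverts (Hd (d(i0 := Suc (d i0))))"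
    unfolding verts_subdivide unfolding Hd_def pair_pre_digraph.simps HV_upd[OF assms(2)] ..
  ultimately show ?thesis by (simp add: pair_pre_digraph.equality)
qed

lemma pbd_of_pg: "pair_graph H \<Longrightarrow> pair_bidirected_digraph H"
proof -
  assume "pair_graph H"
  then interpret pair_graph H .
  show ?thesis by unfold_locales
qed

lemma wf_of_pg: "pair_graph H \<Longrightarrow> wf_digraph (with_proj H)"
proof -
  assume "pair_graph H"
  then interpret pair_graph H .
  show ?thesis by unfold_locales
qed

abbreviation "H0 \<equiv> Hd (\<lambda>_. 0)"

lemma ok0: "ok (\<lambda>_. 0)" unfolding ok_def using k1 by simp

lemma sub_base: "subdivision_pair H0 H0"
  by (rule subdivision_pair_base) (rule pbd_of_pg[OF pg_Hd[OF ok0]])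

lemma sub_ext: assumes "ok d" "i0 < 3" "n + d i0 < k" "subdivision_pair H0 (Hd d)"
  shows "ok (d(i0 := n + d i0)) \<and> subdivision_pair H0 (Hd (d(i0 := n + d i0)))"
  using assms(3)
proof (induction n)
  case 0 then show ?case using assms by simp
next
  case (Suc n)
  let ?d = "d(i0 := n + d i0)"
  have "n + d i0 < k" using Suc.prems by simp
  then have IH: "ok ?d" "subdivision_pair H0 (Hd ?d)" using Suc.IH by blast+
  have lt: "Suc (?d i0) < k" using Suc.prems by simp
  have eq: "d(i0 := Suc n + d i0) = ?d(i0 := Suc (?d i0))" by simp
  have okn: "ok (d(i0 := Suc n + d i0))" using IH(1) Suc.prems unfolding ok_def by auto
  have e_in: "(tv (?d i0) i0, q) \<in> parcs (Hd ?d)"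
    unfolding Hd_def using assms(2) by (auto simp: HA0_iff)
  have w_notin: "tv (Suc (?d i0)) i0 \<notin> pverts (Hd ?d)"
    unfolding Hd_def pair_pre_digraph.simps HV_iff using lt assms(2)
    by (auto simp del: fun_upd_apply)
  have "subdivision_pair H0 (subdivide (Hd ?d) (tv (?d i0) i0, q) (tv (Suc (?d i0)) i0))"
    by (rule subdivision_pair_divide[OF e_in w_notin IH(2)])
  then have "subdivision_pair H0 (Hd (d(i0 := Suc n + d i0)))" unfolding Hd_subdiv[OF IH(1) assms(2) lt] eq[symmetric] .
  then show ?case using okn by blast
qed

definition dF :: "nat \<Rightarrow> nat" where "dF = (((\<lambda>_. 0)(0 := k - 1 + 0))(1 := k - 1 + 0))(2 := k - 1 + 0)"

lemma sub_full: "ok dF \<and> subdivision_pair H0 (Hd dF)"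
proof -
  have km: "k - 1 + 0 < k" using k1 by simp
  have s1: "ok ((\<lambda>_. 0)(0 := k - 1 + 0)) \<and> subdivision_pair H0 (Hd ((\<lambda>_. 0)(0 := k - 1 + 0)))"
    using sub_ext[OF ok0 _ _ sub_base, of 0 "k-1"] km by simp
  let ?d1 = "(\<lambda>_. 0)(0 := k - 1 + 0)"
  have s2: "ok (?d1(1 := k - 1 + 0)) \<and> subdivision_pair H0 (Hd (?d1(1 := k - 1 + 0)))"
    using sub_ext[of ?d1 1 "k-1"] s1 km by simp
  let ?d2 = "?d1(1 := k - 1 + 0)"
  have "ok (?d2(2 := k - 1 + 0)) \<and> subdivision_pair H0 (Hd (?d2(2 := k - 1 + 0)))"
    using sub_ext[of ?d2 2 "k-1"] s2 km by simp
  then show ?thesis unfolding dF_def .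
qed

lemma dF_val: "i < 3 \<Longrightarrow> dF i = k - 1" unfolding dF_def lt3 by auto

lemma subgraph_HF: "subgraph (with_proj (Hd dF)) (with_proj G)"
proof -
  have k0: "0 < k" using k1 by simp
  have V: "pverts (Hd dF) \<subseteq> pverts G"
  proof
    fix x assume "x \<in> pverts (Hd dF)"
    then have "x = p \<or> x = c 0 \<or> x = q \<or> (\<exists>j i. i < 3 \<and> j \<le> dF i \<and> x = tv j i)" by (simp add: Hd_def HV_iff)
    then show "x \<in> pverts G"
    proof (elim disjE exE conjE)
      fix j i assume "i < 3" "j \<le> dF i" "x = tv j i"
      then have "j < k" using dF_val k0 by simp
      then show ?thesis using \<open>i < 3\<close> \<open>x = tv j i\<close> tv_in by (simp add: verts_G)
    qed (use k0 in \<open>auto simp: verts_G p_in q_in cv_in\<close>)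
  qed
  have A0: "HA0 dF \<subseteq> parcs G"
  proof
    fix x assume "x \<in> HA0 dF"
    then obtain a b where x: "x = (a,b)" "(a,b) \<in> HA0 dF" by (cases x) auto
    from x(2) have "(a,b) \<in> parcs G" unfolding HA0_iff
    proof (elim disjE exE conjE)
      fix j i assume "i < 3" "j < dF i" "a = tv j i" "b = tv (Suc j) i"
      then have "Suc j < k" using dF_val by simp
      then show ?thesis using \<open>i < 3\<close> \<open>a = tv j i\<close> \<open>b = tv (Suc j) i\<close> arcs_basic(7) by simp
    next
      fix i assume "i < 3" "a = tv (dF i) i" "b = q"
      then show ?thesis using arcs_basic(5) dF_val by simp
    qed (use k0 arcs_basic in auto)
    then show "x \<in> parcs G" using x by simp
  qed
  then have A: "parcs (Hd dF) \<subseteq> parcs G" using arc_sym by (auto simp: Hd_def)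
  show ?thesis unfolding subgraph_def
    using V A wf_of_pg[OF pair_graph_G] wf_of_pg[OF pg_Hd] sub_full by auto
qed

lemma nonplanar_G: "\<not> kuratowski_planar (with_proj G)"
  unfolding kuratowski_planar_def
  using subgraph_HF sub_full H0_K33 by blast

end



definition cyc :: "nat \<Rightarrow> nat \<Rightarrow> bool" where
  "cyc x y \<longleftrightarrow> (x = 1 \<and> y = 2) \<or> (x = 2 \<and> y = 3) \<or> (x = 3 \<and> y = 1)"

definition inj3 :: "(nat \<Rightarrow> nat) \<Rightarrow> bool" where
  "inj3 f \<longleftrightarrow> f 0 \<noteq> f 1 \<and> f 0 \<noteq> f 2 \<and> f 1 \<noteq> f 2"

lemma inj3D: "inj3 f \<Longrightarrow> i < 3 \<Longrightarrow> i' < 3 \<Longrightarrow> i \<noteq> i' \<Longrightarrow> f i \<noteq> f i'"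
  unfolding inj3_def lt3 by auto

lemma inj3I: "(\<And>i i'. i < 3 \<Longrightarrow> i' < 3 \<Longrightarrow> i \<noteq> i' \<Longrightarrow> f i \<noteq> f i') \<Longrightarrow> inj3 f"
  unfolding inj3_def by auto

lemma S_det0:
  fixes b0 b1 b2 s0 s1 s2 t0 t1 t2 :: nat
  assumes "b0 \<in> {1,2,3}" "b1 \<in> {1,2,3}" "b2 \<in> {1,2,3}" "b0 \<noteq> b1" "b0 \<noteq> b2" "b1 \<noteq> b2"
   "s0 \<in> {1,2,3}" "s1 \<in> {1,2,3}" "s2 \<in> {1,2,3}" "s0 \<noteq> s1" "s0 \<noteq> s2" "s1 \<noteq> s2"
   "t0 \<in> {1,2,3}" "t1 \<in> {1,2,3}" "t2 \<in> {1,2,3}" "t0 \<noteq> t1" "t0 \<noteq> t2" "t1 \<noteq> t2"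
   "s0 \<noteq> b0" "s1 \<noteq> b1" "s2 \<noteq> b2" "t0 \<noteq> b0" "t1 \<noteq> b1" "t2 \<noteq> b2"
   "cyc b0 s0 \<longleftrightarrow> cyc b0 t0"
  shows "s0 = t0 \<and> s1 = t1 \<and> s2 = t2"
  using assms unfolding cyc_def by auto

lemma third_inj0:
  fixes b0 b1 b2 s0 s1 s2 a0 a1 a2 :: nat
  assumes "b0 \<in> {1,2,3}" "b1 \<in> {1,2,3}" "b2 \<in> {1,2,3}" "b0 \<noteq> b1" "b0 \<noteq> b2" "b1 \<noteq> b2"
   "s0 \<in> {1,2,3}" "s1 \<in> {1,2,3}" "s2 \<in> {1,2,3}" "s0 \<noteq> s1" "s0 \<noteq> s2" "s1 \<noteq> s2"
   "a0 \<in> {1,2,3}" "a1 \<in> {1,2,3}" "a2 \<in> {1,2,3}"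
   "s0 \<noteq> b0" "s1 \<noteq> b1" "s2 \<noteq> b2" "a0 \<noteq> b0" "a1 \<noteq> b1" "a2 \<noteq> b2" "a0 \<noteq> s0" "a1 \<noteq> s1" "a2 \<noteq> s2"
  shows "a0 \<noteq> a1 \<and> a0 \<noteq> a2 \<and> a1 \<noteq> a2"
  using assms by auto

lemma third_inj:
  assumes "\<And>i. i < 3 \<Longrightarrow> b i \<in> {1,2,3} \<and> s i \<in> {1,2,3} \<and> a i \<in> {1,2,3} \<and> s i \<noteq> b i \<and> a i \<noteq> b i \<and> a i \<noteq> s i"
    "inj3 b" "inj3 s"
  shows "inj3 a"
  using third_inj0[of "b 0" "b 1" "b 2" "s 0" "s 1" "s 2" "a 0" "a 1" "a 2"] assms(1)[of 0] assms(1)[of 1] assms(1)[of 2] assms(2,3)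
  unfolding inj3_def by simp

lemma S_det:
  assumes "\<And>i. i < 3 \<Longrightarrow> b i \<in> {1,2,3} \<and> s i \<in> {1,2,3} \<and> t i \<in> {1,2,3} \<and> s i \<noteq> b i \<and> t i \<noteq> b i"
    "inj3 b" "inj3 s" "inj3 t" "cyc (b 0) (s 0) \<longleftrightarrow> cyc (b 0) (t 0)" "i < 3"
  shows "s i = t i"
  using S_det0[of "b 0" "b 1" "b 2" "s 0" "s 1" "s 2" "t 0" "t 1" "t 2"] assms(1)[of 0] assms(1)[of 1] assms(1)[of 2] assms(2-6)
  unfolding inj3_def lt3 by auto

lemma third_det:
  assumes "a \<in> {1,2,3::nat}" "a' \<in> {1,2,3}" "b \<in> {1,2,3}" "s \<in> {1,2,3}" "b \<noteq> s" "a \<noteq> b" "a \<noteq> s" "a' \<noteq> b" "a' \<noteq> s"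
  shows "a = a'"
  using assms by auto

lemma z_exists: assumes "inj3 b" "inj3 s" obtains z where "z < 3" "b z \<noteq> d" "s z \<noteq> d"
proof -
  have "\<exists>z<3. b z \<noteq> d \<and> s z \<noteq> d"
  proof (rule ccontr)
    assume "\<not> ?thesis"
    then have "(b 0 = d \<or> s 0 = d) \<and> (b 1 = d \<or> s 1 = d) \<and> (b 2 = d \<or> s 2 = d)" by auto
    then show False using assms unfolding inj3_def by auto
  qed
  then show ?thesis using that by blast
qed

lemma some_ne: assumes "inj3 b" obtains z where "z < 3" "b z \<noteq> d"
  using z_exists[OF assms assms] by blast

context L begin

abbreviation "COL \<equiv> edge_3_colorings G"

lemma uedgeI: "(u,v) \<in> parcs G \<Longrightarrow> {u,v} \<in> uedges G"
  unfolding uedges_def by blast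

lemma uedgeE: assumes "e \<in> uedges G" obtains u v where "(u,v) \<in> parcs G" "e = {u,v}"
  using assms unfolding uedges_def by blast

lemma COL_iff: "col \<in> COL \<longleftrightarrow> (\<forall>e \<in> uedges G. col e \<in> {1, 2, 3}) \<and>
      (\<forall>e. e \<notin> uedges G \<longrightarrow> col e = 0) \<and>
      (\<forall>e \<in> uedges G. \<forall>f \<in> uedges G. e \<noteq> f \<and> e \<inter> f \<noteq> {} \<longrightarrow> col e \<noteq> col f)"
  unfolding edge_3_colorings_def by (rule mem_Collect_eq)

lemma colF1: assumes "col \<in> COL" "(u,v) \<in> parcs G" shows "col {u,v} \<in> {1,2,3}"
proof -
  have "\<forall>e \<in> uedges G. col e \<in> {1, 2, 3}" using assms(1) unfolding COL_iff by (rule conjunct1)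
  then show ?thesis using uedgeI[OF assms(2)] by (rule bspec)
qed

lemma colF3: assumes "col \<in> COL" "e \<notin> uedges G" shows "col e = 0"
proof -
  have "\<forall>e. e \<notin> uedges G \<longrightarrow> col e = 0" using assms(1) unfolding COL_iff by (rule conjunct2[THEN conjunct1])
  then show ?thesis using assms(2) by simp
qed

lemma colF2: assumes "col \<in> COL" "(w,x) \<in> parcs G" "(w,y) \<in> parcs G" "x \<noteq> y"
  shows "col {w,x} \<noteq> col {w,y}"
proof -
  have wx: "w \<noteq> x" using arc_in[OF assms(2)] by simp
  have ne: "{w,x} \<noteq> {w,y}"
  proof
    assume "{w,x} = {w,y}"
    then have "x \<in> {w,y}" by (metis insertI1 insertI2)
    then show False using wx assms(4) by simp
  qed
  have int: "{w,x} \<inter> {w,y} \<noteq> {}" by simp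
  have P: "\<forall>e \<in> uedges G. \<forall>f \<in> uedges G. e \<noteq> f \<and> e \<inter> f \<noteq> {} \<longrightarrow> col e \<noteq> col f"
    using assms(1) unfolding COL_iff by (rule conjunct2[THEN conjunct2])
  show ?thesis using P[rule_format, OF uedgeI[OF assms(2)] uedgeI[OF assms(3)], OF conjI[OF ne int]] .
qed

lemma colI:
  assumes "\<And>u v. (u,v) \<in> parcs G \<Longrightarrow> col {u,v} \<in> {1,2,3}"
    "\<And>e. e \<notin> uedges G \<Longrightarrow> col e = 0"
    "\<And>w x y. (w,x) \<in> parcs G \<Longrightarrow> (w,y) \<in> parcs G \<Longrightarrow> x \<noteq> y \<Longrightarrow> col {w,x} \<noteq> col {w,y}"
  shows "col \<in> COL"
  unfolding COL_iff
proof (intro conjI ballI allI impI)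
  fix e assume "e \<in> uedges G"
  then obtain u v where "(u,v) \<in> parcs G" "e = {u,v}" by (rule uedgeE)
  then show "col e \<in> {1,2,3}" using assms(1) by simp
next
  fix e assume "e \<notin> uedges G" then show "col e = 0" using assms(2) by blast
next
  fix e f assume e: "e \<in> uedges G" and f: "f \<in> uedges G" and ef: "e \<noteq> f \<and> e \<inter> f \<noteq> {}"
  obtain u1 v1 where e1: "(u1,v1) \<in> parcs G" "e = {u1,v1}" using e by (rule uedgeE)
  obtain u2 v2 where f1: "(u2,v2) \<in> parcs G" "f = {u2,v2}" using f by (rule uedgeE)
  obtain z where z: "z \<in> e" "z \<in> f" using ef by blast
  have ex: "\<exists>x. (z,x) \<in> parcs G \<and> g = {z,x}" if "(u,v) \<in> parcs G" "g = {u,v}" "z \<in> g" for u v g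
  proof -
    have "z = u \<or> z = v" using that(2,3) by blast
    then show ?thesis
    proof
      assume "z = u" then show ?thesis using that(1,2) by blast
    next
      assume "z = v" then have "(z,u) \<in> parcs G" "g = {z,u}" using that(1,2) arc_sym by (blast, blast)
      then show ?thesis by blast
    qed
  qed
  obtain x where x: "(z,x) \<in> parcs G" "e = {z,x}" using ex[OF e1 z(1)] by blast
  obtain y where y: "(z,y) \<in> parcs G" "f = {z,y}" using ex[OF f1 z(2)] by blast
  have "x \<noteq> y" using ef x y by auto
  then show "col e \<noteq> col f" using assms(3)[OF x(1) y(1)] x y by simp
qed

definition Bc :: "(nat set \<Rightarrow> nat) \<Rightarrow> nat \<Rightarrow> nat \<Rightarrow> nat" where "Bc col j i = col {tv j i, up j i}"
definition Sc :: "(nat set \<Rightarrow> nat) \<Rightarrow> nat \<Rightarrow> nat \<Rightarrow> nat" where "Sc col j i = col {tv j i, c j}"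
definition Ac :: "(nat set \<Rightarrow> nat) \<Rightarrow> nat \<Rightarrow> nat \<Rightarrow> nat" where "Ac col j i = col {tv j i, dn j i}"

lemma layer_vals: assumes "col \<in> COL" "j < k" "i < 3"
  shows "Bc col j i \<in> {1,2,3}" "Sc col j i \<in> {1,2,3}" "Ac col j i \<in> {1,2,3}"
    "Sc col j i \<noteq> Bc col j i" "Ac col j i \<noteq> Bc col j i" "Ac col j i \<noteq> Sc col j i"
proof -
  have a: "(tv j i, c j) \<in> parcs G" "(tv j i, up j i) \<in> parcs G" "(tv j i, dn j i) \<in> parcs G"
    using arc_tv'[OF assms(2,3)] by auto
  note d = up_dn_distinct[OF assms(2,3)]
  show "Bc col j i \<in> {1,2,3}" "Sc col j i \<in> {1,2,3}" "Ac col j i \<in> {1,2,3}"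
    unfolding Bc_def Sc_def Ac_def using colF1[OF assms(1)] a by blast+
  show "Sc col j i \<noteq> Bc col j i" unfolding Bc_def Sc_def using colF2[OF assms(1) a(1) a(2)] d by blast
  show "Ac col j i \<noteq> Bc col j i" unfolding Bc_def Ac_def using colF2[OF assms(1) a(3) a(2)] d by metis
  show "Ac col j i \<noteq> Sc col j i" unfolding Sc_def Ac_def using colF2[OF assms(1) a(3) a(1)] d by metis
qed

lemma Sc_inj: assumes "col \<in> COL" "j < k" shows "inj3 (Sc col j)"
proof (rule inj3I)
  fix i i' :: nat assume "i < 3" "i' < 3" "i \<noteq> i'"
  then have "col {c j, tv j i} \<noteq> col {c j, tv j i'}"
    using colF2[OF assms(1)] arcs_basic(2)[OF assms(2)] by simp
  then show "Sc col j i \<noteq> Sc col j i'" unfolding Sc_def by (simp add: insert_commute)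
qed

lemma Bc0_inj: assumes "col \<in> COL" shows "inj3 (Bc col 0)"
proof (rule inj3I)
  fix i i' :: nat assume "i < 3" "i' < 3" "i \<noteq> i'"
  then have "col {p, tv 0 i} \<noteq> col {p, tv 0 i'}"
    using colF2[OF assms(1)] arcs_basic(4) by simp
  then show "Bc col 0 i \<noteq> Bc col 0 i'" unfolding Bc_def up_def by (simp add: insert_commute)
qed

lemma Ac_last_inj: assumes "col \<in> COL" shows "inj3 (Ac col (k-1))"
proof (rule inj3I)
  fix i i' :: nat assume "i < 3" "i' < 3" "i \<noteq> i'"
  then have "col {q, tv (k-1) i} \<noteq> col {q, tv (k-1) i'}"
    using colF2[OF assms(1)] arcs_basic(6) by simp
  moreover have "Suc (k-1) = k" using k1 by simp
  ultimately show "Ac col (k-1) i \<noteq> Ac col (k-1) i'" unfolding Ac_def dn_def by (simp add: insert_commute)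
qed

lemma Bc_Suc: "Suc j < k \<Longrightarrow> Bc col (Suc j) i = Ac col j i"
  unfolding Bc_def Ac_def up_def dn_def by (simp add: insert_commute)

lemma Bc_inj: assumes "col \<in> COL" "j < k" shows "inj3 (Bc col j) \<and> inj3 (Ac col j)"
  using assms(2)
proof (induction j)
  case 0
  have "inj3 (Ac col 0)" using third_inj[OF _ Bc0_inj[OF assms(1)] Sc_inj[OF assms(1) 0(1)]] layer_vals[OF assms(1) 0] by blast
  then show ?case using Bc0_inj[OF assms(1)] by blast
next
  case (Suc j)
  have eq: "Bc col (Suc j) = Ac col j" by (rule ext) (rule Bc_Suc[OF Suc(2)])
  have B: "inj3 (Bc col (Suc j))" using Suc.IH Suc.prems unfolding eq by simp
  have "inj3 (Ac col (Suc j))" using third_inj[OF _ B Sc_inj[OF assms(1) Suc(2)]] layer_vals[OF assms(1) Suc(2)] by blast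
  then show ?case using B by blast
qed

definition sw :: "nat \<Rightarrow> nat \<Rightarrow> nat \<Rightarrow> nat" where
  "sw a b t = (if t = a then b else if t = b then a else t)"

lemma sw_sw[simp]: "sw a b (sw a b t) = t" unfolding sw_def by auto
lemma sw_inj: "sw a b s = sw a b t \<Longrightarrow> s = t" by (metis sw_sw)

definition T3 :: "nat \<Rightarrow> nat \<Rightarrow> nat \<Rightarrow> bool" where
  "T3 a b d \<longleftrightarrow> a \<in> {1,2,3} \<and> b \<in> {1,2,3} \<and> d \<in> {1,2,3} \<and> a \<noteq> b \<and> d \<noteq> a \<and> d \<noteq> b"

lemma T3D: "T3 a b d \<Longrightarrow> t \<in> {1,2,3} \<Longrightarrow> (t = a \<or> t = b) \<longleftrightarrow> t \<noteq> d"
  unfolding T3_def by auto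

lemma third_ex: assumes "a \<in> {1,2,3::nat}" "b \<in> {1,2,3}" "a \<noteq> b"
  obtains d where "T3 a b d"
proof -
  have "T3 a b (6 - a - b)" using assms unfolding T3_def by auto
  then show ?thesis using that by blast
qed

definition W :: "(nat set \<Rightarrow> nat) \<Rightarrow> nat \<Rightarrow> (nat \<times> nat) set" where
  "W col d = {(u,v). (u,v) \<in> parcs G \<and> col {u,v} \<noteq> d}"

lemma W_I: "(u,v) \<in> parcs G \<Longrightarrow> col {u,v} \<noteq> d \<Longrightarrow> (u,v) \<in> W col d"
  unfolding W_def by simp

lemma reach_layer: assumes col: "col \<in> COL" and j: "j < k" and up: "\<And>i. i < 3 \<Longrightarrow> (p, up j i) \<in> (W col d)\<^sup>*"
  shows "(\<forall>i<3. (p, tv j i) \<in> (W col d)\<^sup>*) \<and> (p, c j) \<in> (W col d)\<^sup>*"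
proof -
  have Binj: "inj3 (Bc col j)" using Bc_inj[OF col j] by blast
  obtain z where z: "z < 3" "Bc col j z \<noteq> d" "Sc col j z \<noteq> d" using z_exists[OF Binj Sc_inj[OF col j]] by blast
  have viaup: "(p, tv j i) \<in> (W col d)\<^sup>*" if "i < 3" "Bc col j i \<noteq> d" for i
  proof -
    have "(tv j i, up j i) \<in> parcs G" using arc_tv'[OF j that(1)] by simp
    then have "(up j i, tv j i) \<in> W col d" using that(2) arc_sym unfolding Bc_def by (intro W_I) (auto simp: insert_commute)
    then show ?thesis by (rule rtrancl_into_rtrancl[OF up[OF that(1)]])
  qed
  have cj: "(p, c j) \<in> (W col d)\<^sup>*"
  proof -
    have "(tv j z, c j) \<in> W col d" using z arcs_basic(1)[OF j z(1)] unfolding Sc_def by (intro W_I) auto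
    then show ?thesis by (rule rtrancl_into_rtrancl[OF viaup[OF z(1,2)]])
  qed
  have "(p, tv j i) \<in> (W col d)\<^sup>*" if i: "i < 3" for i
  proof (cases "Bc col j i = d")
    case True
    then have "Sc col j i \<noteq> d" using layer_vals(4)[OF col j i] by simp
    then have "(c j, tv j i) \<in> W col d" using arcs_basic(2)[OF j i] unfolding Sc_def by (intro W_I) (auto simp: insert_commute)
    then show ?thesis by (rule rtrancl_into_rtrancl[OF cj])
  next
    case False then show ?thesis using viaup[OF i] by simp
  qed
  then show ?thesis using cj by blast
qed

lemma reach_layers: assumes col: "col \<in> COL"
  shows "j < k \<Longrightarrow> (\<forall>i<3. (p, tv j i) \<in> (W col d)\<^sup>*) \<and> (p, c j) \<in> (W col d)\<^sup>*"
proof (induction j)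
  case 0
  show ?case by (rule reach_layer[OF col 0]) (simp add: up_def)
next
  case (Suc j)
  then have "\<forall>i<3. (p, tv j i) \<in> (W col d)\<^sup>*" by simp
  then show ?case by (intro reach_layer[OF col Suc.prems]) (simp add: up_def)
qed

lemma reach_all: assumes col: "col \<in> COL" and v: "v < nv k" shows "(p, v) \<in> (W col d)\<^sup>*"
  using v
proof (cases rule: verts_cases)
  case (T j i) then show ?thesis using reach_layers[OF col T(1)] by blast
next
  case (C j) then show ?thesis using reach_layers[OF col C(1)] by blast
next
  case P then show ?thesis by simp
next
  case Q
  obtain i where i: "i < 3" "Ac col (k-1) i \<noteq> d" using some_ne[OF Ac_last_inj[OF col]] by blast
  have km: "k - 1 < k" using k1 by simp
  have "Suc (k-1) = k" using k1 by simp
  then have "(tv (k-1) i, q) \<in> W col d" using i arcs_basic(5)[OF i(1)] unfolding Ac_def dn_def by (intro W_I) auto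
  then show ?thesis using reach_layers[OF col km] i(1) Q by (meson rtrancl_into_rtrancl)
qed

definition Rl :: "(nat set \<Rightarrow> nat) \<Rightarrow> nat \<Rightarrow> nat \<Rightarrow> (nat set \<times> nat set) set" where
  "Rl col a b = {(e, f). e \<in> ab_edges G col a b \<and> f \<in> ab_edges G col a b \<and> e \<inter> f \<noteq> {}}"

lemma ab_iff: assumes col: "col \<in> COL" and dd: "T3 a b d"
  shows "e \<in> ab_edges G col a b \<longleftrightarrow> e \<in> uedges G \<and> col e \<noteq> d"
proof -
  have "e \<in> uedges G \<Longrightarrow> col e \<in> {1,2,3}" using colF1[OF col] by (auto elim: uedgeE)
  then show ?thesis unfolding ab_edges_def using T3D[OF dd] by auto
qed

lemma W_line: assumes col: "col \<in> COL" and dd: "T3 a b d"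
  and uv: "(u,v) \<in> (W col d)\<^sup>*" and e: "e \<in> ab_edges G col a b" "u \<in> e"
  shows "f \<in> ab_edges G col a b \<Longrightarrow> v \<in> f \<Longrightarrow> (e,f) \<in> (Rl col a b)\<^sup>*"
  using uv
proof (induction arbitrary: f rule: rtrancl_induct)
  case base
  then have "(e,f) \<in> Rl col a b" using e unfolding Rl_def by blast
  then show ?case by (rule r_into_rtrancl)
next
  case (step y z)
  have yz: "(y,z) \<in> parcs G" "col {y,z} \<noteq> d" using step(2) unfolding W_def by auto
  have g: "{y,z} \<in> ab_edges G col a b"
    apply (rule ab_iff[OF col dd, THEN iffD2])
    apply (rule conjI)
     apply (rule uedgeI[OF yz(1)])
    apply (rule yz(2))
    done
  have "(e, {y,z}) \<in> (Rl col a b)\<^sup>*" using step.IH[OF g] by simp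
  moreover have "({y,z}, f) \<in> Rl col a b" using g step.prems unfolding Rl_def by blast
  ultimately show ?case by (rule rtrancl_into_rtrancl)
qed

lemma chain_full: assumes col: "col \<in> COL" and ab: "a \<in> {1,2,3}" "b \<in> {1,2,3}" "a \<noteq> b"
  shows "kempe_chains G col a b = {ab_edges G col a b}"
proof -
  obtain d where dd: "T3 a b d" using third_ex[OF ab] by blast
  let ?ab = "ab_edges G col a b"
  obtain i0 where i0: "i0 < 3" "Bc col 0 i0 \<noteq> d" using some_ne[OF Bc0_inj[OF col]] by blast
  let ?g = "{tv 0 i0, p}"
  have g: "?g \<in> ?ab" using i0 uedgeI[OF arcs_basic(3)[OF i0(1)]] unfolding Bc_def up_def by (intro ab_iff[OF col dd, THEN iffD2]) auto
  have symR: "sym (Rl col a b)" unfolding Rl_def sym_def by auto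
  have toall: "(?g, e) \<in> (Rl col a b)\<^sup>*" if e: "e \<in> ?ab" for e
  proof -
    have "e \<in> uedges G" using e unfolding ab_edges_def by simp
    then obtain u v where uv: "(u,v) \<in> parcs G" "e = {u,v}" by (rule uedgeE)
    have "(p,u) \<in> (W col d)\<^sup>*" using reach_all[OF col] arc_in[OF uv(1)] by simp
    then show ?thesis using W_line[OF col dd _ g] e uv(2) by simp
  qed
  have conn: "(e, f) \<in> (Rl col a b)\<^sup>*" if "e \<in> ?ab" "f \<in> ?ab" for e f
  proof -
    have "(?g, e) \<in> (Rl col a b)\<^sup>*" using toall that(1) .
    then have "(e, ?g) \<in> (Rl col a b)\<^sup>*" using sym_rtrancl[OF symR] unfolding sym_def by blast
    then show ?thesis using toall[OF that(2)] by (rule rtrancl_trans)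
  qed
  have cls: "(Rl col a b)\<^sup>* `` {x} = ?ab" if x: "x \<in> ?ab" for x
  proof
    show "(Rl col a b)\<^sup>* `` {x} \<subseteq> ?ab"
    proof
      fix y assume "y \<in> (Rl col a b)\<^sup>* `` {x}"
      then have "(x,y) \<in> (Rl col a b)\<^sup>*" by simp
      then show "y \<in> ?ab" using x by (induction rule: rtrancl_induct) (auto simp: Rl_def)
    qed
  next
    show "?ab \<subseteq> (Rl col a b)\<^sup>* `` {x}" using conn[OF x] by blast
  qed
  have "kempe_chains G col a b = ?ab // (Rl col a b)\<^sup>*" unfolding kempe_chains_def Rl_def ..
  also have "\<dots> = {?ab}" unfolding quotient_def using cls g by blast
  finally show ?thesis .
qed

lemma switch_eq: assumes col: "col \<in> COL" and ab: "a \<in> {1,2,3}" "b \<in> {1,2,3}" "a \<noteq> b"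
  shows "kempe_switch col a b (ab_edges G col a b) = (\<lambda>e. sw a b (col e))"
proof
  fix e
  show "kempe_switch col a b (ab_edges G col a b) e = sw a b (col e)"
  proof (cases "e \<in> uedges G")
    case True
    then show ?thesis unfolding kempe_switch_def sw_def ab_edges_def by auto
  next
    case False
    then have "col e = 0" using colF3[OF col] by simp
    then show ?thesis using False ab unfolding kempe_switch_def sw_def ab_edges_def by auto
  qed
qed

lemma sw_COL: assumes col: "col \<in> COL" and ab: "a \<in> {1,2,3}" "b \<in> {1,2,3}" "a \<noteq> b"
  shows "(\<lambda>e. sw a b (col e)) \<in> COL"
proof (rule colI)
  fix u v assume "(u,v) \<in> parcs G"
  then have "col {u,v} \<in> {1,2,3}" using colF1[OF col] by blast
  then show "sw a b (col {u,v}) \<in> {1,2,3}" using ab unfolding sw_def by auto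
next
  fix e assume "e \<notin> uedges G"
  then have "col e = 0" using colF3[OF col] by blast
  then show "sw a b (col e) = 0" using ab unfolding sw_def by auto
next
  fix w x y assume "(w,x) \<in> parcs G" "(w,y) \<in> parcs G" "x \<noteq> y"
  then have "col {w,x} \<noteq> col {w,y}" using colF2[OF col] by blast
  then show "sw a b (col {w,x}) \<noteq> sw a b (col {w,y})" using sw_inj by blast
qed

lemma step_iff: "(x,y) \<in> kempe_step G \<longleftrightarrow> x \<in> COL \<and> (\<exists>a b. a \<in> {1,2,3} \<and> b \<in> {1,2,3} \<and> a \<noteq> b \<and> y = (\<lambda>e. sw a b (x e)))"
proof
  assume "(x,y) \<in> kempe_step G"
  then obtain a b C where x: "x \<in> COL" and ab: "a \<in> {1,2,3}" "b \<in> {1,2,3}" "a \<noteq> b"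
    and C: "C \<in> kempe_chains G x a b" and y: "y = kempe_switch x a b C"
    unfolding kempe_step_def by blast
  have "C = ab_edges G x a b" using C chain_full[OF x ab] by simp
  then have "y = (\<lambda>e. sw a b (x e))" using y switch_eq[OF x ab] by simp
  then show "x \<in> COL \<and> (\<exists>a b. a \<in> {1,2,3} \<and> b \<in> {1,2,3} \<and> a \<noteq> b \<and> y = (\<lambda>e. sw a b (x e)))"
    using x ab by blast
next
  assume "x \<in> COL \<and> (\<exists>a b. a \<in> {1,2,3} \<and> b \<in> {1,2,3} \<and> a \<noteq> b \<and> y = (\<lambda>e. sw a b (x e)))"
  then obtain a b where x: "x \<in> COL" and ab: "a \<in> {1,2,3}" "b \<in> {1,2,3}" "a \<noteq> b" and y: "y = (\<lambda>e. sw a b (x e))"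
    by blast
  have "ab_edges G x a b \<in> kempe_chains G x a b" using chain_full[OF x ab] by simp
  moreover have "y = kempe_switch x a b (ab_edges G x a b)" using switch_eq[OF x ab] y by simp
  ultimately show "(x,y) \<in> kempe_step G" unfolding kempe_step_def using x ab by blast
qed

lemma cyc_sw: assumes "x \<in> {1,2,3}" "y \<in> {1,2,3}" "x \<noteq> y" "a \<in> {1,2,3}" "b \<in> {1,2,3}" "a \<noteq> b"
  shows "cyc (sw a b x) (sw a b y) \<longleftrightarrow> \<not> cyc x y"
  using assms unfolding insert_iff empty_iff
  by (elim disjE) (simp_all add: cyc_def sw_def)

definition inv :: "(nat set \<Rightarrow> nat) \<Rightarrow> nat \<Rightarrow> bool" where
  "inv col = (\<lambda>j. j < k \<and> (cyc (Bc col j 0) (Sc col j 0) \<longleftrightarrow> cyc (Bc col 0 0) (Bc col 0 1)))"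

lemma Bc_sw: "Bc (\<lambda>e. sw a b (col e)) j i = sw a b (Bc col j i)" unfolding Bc_def ..
lemma Sc_sw: "Sc (\<lambda>e. sw a b (col e)) j i = sw a b (Sc col j i)" unfolding Sc_def ..

lemma inv_sw: assumes col: "col \<in> COL" and ab: "a \<in> {1,2,3}" "b \<in> {1,2,3}" "a \<noteq> b"
  shows "inv (\<lambda>e. sw a b (col e)) = inv col"
proof
  fix j
  have k0: "0 < k" using k1 by simp
  have e0: "cyc (sw a b (Bc col 0 0)) (sw a b (Bc col 0 1)) \<longleftrightarrow> \<not> cyc (Bc col 0 0) (Bc col 0 1)"
    using layer_vals(1)[OF col k0, of 0] layer_vals(1)[OF col k0, of 1] Bc0_inj[OF col] ab
    by (intro cyc_sw) (auto simp: inj3_def)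
  show "inv (\<lambda>e. sw a b (col e)) j = inv col j"
  proof (cases "j < k")
    case True
    have "cyc (sw a b (Bc col j 0)) (sw a b (Sc col j 0)) \<longleftrightarrow> \<not> cyc (Bc col j 0) (Sc col j 0)"
      using layer_vals[OF col True, of 0] ab by (intro cyc_sw) auto
    then show ?thesis unfolding inv_def Bc_sw Sc_sw using e0 by auto
  next
    case False then show ?thesis unfolding inv_def by simp
  qed
qed

abbreviation "Rk \<equiv> (kempe_step G \<union> (kempe_step G)\<inverse>)\<^sup>*"

lemma Rk_fwd: assumes "(x,y) \<in> Rk" "x \<in> COL" shows "y \<in> COL \<and> inv y = inv x"
  using assms(1)
proof (induction rule: rtrancl_induct)
  case base then show ?case using assms(2) by simp
next
  case (step y z)
  from step(2) show ?case
  proof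
    assume "(y,z) \<in> kempe_step G"
    then obtain a b where y: "y \<in> COL" and ab: "a \<in> {1,2,3}" "b \<in> {1,2,3}" "a \<noteq> b" and z: "z = (\<lambda>e. sw a b (y e))"
      unfolding step_iff by blast
    show ?thesis using sw_COL[OF y ab] inv_sw[OF y ab] z step.IH by simp
  next
    assume "(y,z) \<in> (kempe_step G)\<inverse>"
    then have "(z,y) \<in> kempe_step G" by simp
    then obtain a b where zc: "z \<in> COL" and ab: "a \<in> {1,2,3}" "b \<in> {1,2,3}" "a \<noteq> b" and y: "y = (\<lambda>e. sw a b (z e))"
      unfolding step_iff by blast
    show ?thesis using inv_sw[OF zc ab] y zc step.IH by simp
  qed
qed

lemma Rk_sym: "(x,y) \<in> Rk \<Longrightarrow> (y,x) \<in> Rk"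
proof -
  have "sym (kempe_step G \<union> (kempe_step G)\<inverse>)" by (rule sym_Un_converse)
  then have "sym Rk" by (rule sym_rtrancl)
  then show "(x,y) \<in> Rk \<Longrightarrow> (y,x) \<in> Rk" unfolding sym_def by blast
qed

lemma sw_Rk: assumes col: "col \<in> COL" and ab: "a \<in> {1,2,3}" "b \<in> {1,2,3}" "a \<noteq> b"
  shows "(col, (\<lambda>e. sw a b (col e))) \<in> Rk"
proof -
  have "(col, (\<lambda>e. sw a b (col e))) \<in> kempe_step G" unfolding step_iff using col ab by blast
  then show ?thesis by blast
qed

lemma normalize: assumes x: "x \<in> COL"
  obtains y where "(x,y) \<in> Rk" "y \<in> COL" "Bc y 0 0 = 1" "Bc y 0 1 = 2" "Bc y 0 2 = 3"
proof -
  have k0: "0 < k" using k1 by simp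
  obtain x1 where x1: "(x,x1) \<in> Rk" "x1 \<in> COL" "Bc x1 0 0 = 1"
  proof (cases "Bc x 0 0 = 1")
    case True then show ?thesis using that x by blast
  next
    case False
    have v: "Bc x 0 0 \<in> {1,2,3}" using layer_vals(1)[OF x k0, of 0] by simp
    let ?x1 = "\<lambda>e. sw (Bc x 0 0) 1 (x e)"
    have "Bc ?x1 0 0 = 1" unfolding Bc_sw by (simp add: sw_def)
    then show ?thesis using that sw_Rk[OF x v _ False] sw_COL[OF x v _ False] by simp
  qed
  obtain x2 where x2: "(x,x2) \<in> Rk" "x2 \<in> COL" "Bc x2 0 0 = 1" "Bc x2 0 1 = 2"
  proof (cases "Bc x1 0 1 = 2")
    case True then show ?thesis using that x1 by blast
  next
    case False
    have v: "Bc x1 0 1 \<in> {1,2,3}" using layer_vals(1)[OF x1(2) k0, of 1] by simp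
    have n1: "Bc x1 0 1 \<noteq> 1" using Bc0_inj[OF x1(2)] x1(3) unfolding inj3_def by simp
    let ?x2 = "\<lambda>e. sw (Bc x1 0 1) 2 (x1 e)"
    have "Bc ?x2 0 0 = 1" "Bc ?x2 0 1 = 2" unfolding Bc_sw using x1(3) n1 by (auto simp: sw_def)
    moreover have "(x, ?x2) \<in> Rk" using rtrancl_trans[OF x1(1) sw_Rk[OF x1(2) v _ False]] by simp
    ultimately show ?thesis using that sw_COL[OF x1(2) v _ False] by simp
  qed
  have "Bc x2 0 2 = 3" using layer_vals(1)[OF x2(2) k0, of 2] Bc0_inj[OF x2(2)] x2(3,4) unfolding inj3_def by auto
  then show ?thesis using that x2 by blast
qed

lemma all_layers_eq: assumes x: "x \<in> COL" and y: "y \<in> COL" and B0: "\<And>i. i < 3 \<Longrightarrow> Bc x 0 i = Bc y 0 i"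
  and iv: "inv x = inv y"
  shows "j < k \<Longrightarrow> (\<forall>i<3. Bc x j i = Bc y j i \<and> Sc x j i = Sc y j i \<and> Ac x j i = Ac y j i)"
proof (induction j)
  have or0: "cyc (Bc x 0 0) (Bc x 0 1) \<longleftrightarrow> cyc (Bc y 0 0) (Bc y 0 1)" using B0 by simp
  have step: "\<forall>i<3. Sc x j i = Sc y j i \<and> Ac x j i = Ac y j i" if j: "j < k" and Bj: "\<forall>i<3. Bc x j i = Bc y j i" for j
  proof -
    have ij: "inv x j = inv y j" using iv by simp
    then have orj: "cyc (Bc x j 0) (Sc x j 0) \<longleftrightarrow> cyc (Bc x j 0) (Sc y j 0)"
      using or0 Bj j unfolding inv_def by auto
    have S: "Sc x j i = Sc y j i" if i: "i < 3" for i
      using Bj layer_vals[OF x j] layer_vals[OF y j]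
      by (intro S_det[OF _ Bc_inj[OF x j, THEN conjunct1] Sc_inj[OF x j] Sc_inj[OF y j] orj i]) auto
    have "Ac x j i = Ac y j i" if i: "i < 3" for i
      using layer_vals[OF x j i] layer_vals[OF y j i] Bj S[OF i] i
      by (intro third_det[of _ _ "Bc x j i" "Sc x j i"]) auto
    then show ?thesis using S by blast
  qed
  {
    case 0
    then show ?case using step[OF 0] B0 by blast
  next
    case (Suc j)
    then have "\<forall>i<3. Bc x j i = Bc y j i \<and> Sc x j i = Sc y j i \<and> Ac x j i = Ac y j i" by simp
    then have "\<forall>i<3. Bc x (Suc j) i = Bc y (Suc j) i" using Bc_Suc[OF Suc.prems] by simp
    then show ?case using step[OF Suc.prems] by blast
  }
qed

lemma arc_cases:
  assumes "(u,v) \<in> parcs G"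
  obtains j i where "j < k" "i < 3" "{u,v} = {tv j i, up j i} \<or> {u,v} = {tv j i, c j} \<or> {u,v} = {tv j i, dn j i}"
proof -
  have uV: "u < nv k" using arc_in[OF assms] by simp
  show ?thesis using uV
  proof (cases rule: verts_cases)
    case (T j i)
    then have "v \<in> {c j, up j i, dn j i}" using arc_tv'[OF T(1,2)] assms by simp
    then show ?thesis using that T by blast
  next
    case (C j)
    then obtain i where "i < 3" "v = tv j i" using arc_cv assms by blast
    then show ?thesis using that[of j i] C by (auto simp: insert_commute)
  next
    case P
    then obtain i where "i < 3" "v = tv 0 i" using arc_p assms by blast
    then show ?thesis using that[of 0 i] P k1 by (auto simp: insert_commute up_def)
  next
    case Q
    then obtain i where i: "i < 3" "v = tv (k-1) i" using arc_q assms by blast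
    have "Suc (k-1) = k" using k1 by simp
    then show ?thesis using that[of "k-1" i] Q i k1 by (auto simp: insert_commute dn_def)
  qed
qed

lemma uniq: assumes x: "x \<in> COL" and y: "y \<in> COL" and B0: "\<And>i. i < 3 \<Longrightarrow> Bc x 0 i = Bc y 0 i"
  and iv: "inv x = inv y"
  shows "x = y"
proof
  fix e
  show "x e = y e"
  proof (cases "e \<in> uedges G")
    case False then show ?thesis using colF3[OF x] colF3[OF y] by simp
  next
    case True
    then obtain u v where uv: "(u,v) \<in> parcs G" "e = {u,v}" by (rule uedgeE)
    obtain j i where ji: "j < k" "i < 3" "{u,v} = {tv j i, up j i} \<or> {u,v} = {tv j i, c j} \<or> {u,v} = {tv j i, dn j i}"
      using arc_cases[OF uv(1)] by blast
    have "Bc x j i = Bc y j i \<and> Sc x j i = Sc y j i \<and> Ac x j i = Ac y j i"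
      using all_layers_eq[OF x y B0 iv ji(1)] ji(2) by blast
    then show ?thesis using ji(3) uv(2) unfolding Bc_def Sc_def Ac_def by (elim disjE conjE) simp_all
  qed
qed

lemma Rk_bwd: assumes x: "x \<in> COL" and y: "y \<in> COL" and iv: "inv x = inv y" shows "(x,y) \<in> Rk"
proof -
  obtain nx where nx: "(x,nx) \<in> Rk" "nx \<in> COL" "Bc nx 0 0 = 1" "Bc nx 0 1 = 2" "Bc nx 0 2 = 3"
    using normalize[OF x] by blast
  obtain ny where ny: "(y,ny) \<in> Rk" "ny \<in> COL" "Bc ny 0 0 = 1" "Bc ny 0 1 = 2" "Bc ny 0 2 = 3"
    using normalize[OF y] by blast
  have i1: "inv nx = inv x" using Rk_fwd[OF nx(1) x] by blast
  have i2: "inv ny = inv y" using Rk_fwd[OF ny(1) y] by blast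
  have iv2: "inv nx = inv ny" using i1 i2 iv by simp
  have B0: "Bc nx 0 i = Bc ny 0 i" if "i < 3" for i
  proof -
    have "i = 0 \<or> i = 1 \<or> i = 2" using that by (simp add: lt3)
    then show ?thesis using nx(3-5) ny(3-5) by (elim disjE) simp_all
  qed
  have "nx = ny" by (rule uniq[OF nx(2) ny(2) B0 iv2])
  then show ?thesis using nx(1) Rk_sym[OF ny(1)] by (meson rtrancl_trans)
qed

lemma class_eq: assumes x: "x \<in> COL" shows "Rk `` {x} = {y \<in> COL. inv y = inv x}"
proof
  show "Rk `` {x} \<subseteq> {y \<in> COL. inv y = inv x}"
  proof
    fix y assume "y \<in> Rk `` {x}"
    then have "(x,y) \<in> Rk" by simp
    then have "y \<in> COL \<and> inv y = inv x" using Rk_fwd[OF _ x] by blast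
    then show "y \<in> {y \<in> COL. inv y = inv x}" by simp
  qed
next
  show "{y \<in> COL. inv y = inv x} \<subseteq> Rk `` {x}"
  proof
    fix y assume "y \<in> {y \<in> COL. inv y = inv x}"
    then have "(x,y) \<in> Rk" using Rk_bwd[OF x] by force
    then show "y \<in> Rk `` {x}" by simp
  qed
qed

definition c3 :: "nat \<Rightarrow> nat" where "c3 t = t mod 3 + 1"

lemma c3_in: "c3 t \<in> {1,2,3}" unfolding c3_def by auto
lemma c3_eq: "c3 s = c3 t \<longleftrightarrow> s mod 3 = t mod 3" unfolding c3_def by simp

definition rr :: "(nat \<Rightarrow> bool) \<Rightarrow> nat \<Rightarrow> nat" where "rr \<beta> j = (if \<beta> j then 1 else 2)"
definition off :: "(nat \<Rightarrow> bool) \<Rightarrow> nat \<Rightarrow> nat" where "off \<beta> j = (\<Sum>l<j. 2 * rr \<beta> l)"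

lemma off_0: "off \<beta> 0 = 0" unfolding off_def by simp
lemma off_Suc: "off \<beta> (Suc j) = off \<beta> j + 2 * rr \<beta> j" unfolding off_def by simp

definition gg :: "(nat \<Rightarrow> bool) \<Rightarrow> nat \<Rightarrow> nat \<Rightarrow> nat" where
  "gg \<beta> u v = (if v = p then c3 (u mod 3) else if v = c (u div 3) then c3 (u mod 3 + off \<beta> (u div 3) + rr \<beta> (u div 3))
     else c3 (u mod 3 + off \<beta> (Suc (u div 3))))"

definition mk :: "(nat \<Rightarrow> bool) \<Rightarrow> nat set \<Rightarrow> nat" where
  "mk \<beta> e = (if e \<in> uedges G then gg \<beta> (Min e) (Max e) else 0)"

lemma tv_div: "i < 3 \<Longrightarrow> tv j i div 3 = j" unfolding tv_def by simp
lemma tv_mod: "i < 3 \<Longrightarrow> tv j i mod 3 = i" unfolding tv_def by simp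

lemma mk_pair: assumes "(u,v) \<in> parcs G" "u < v" shows "mk \<beta> {u,v} = gg \<beta> u v"
  unfolding mk_def using uedgeI[OF assms(1)] assms(2) by simp

lemma tv_lt_c: "j < k \<Longrightarrow> i < 3 \<Longrightarrow> tv j i < c j'" using tv_lt unfolding cv_def by fastforce
lemma tv_lt_p: "j < k \<Longrightarrow> i < 3 \<Longrightarrow> tv j i < p" using tv_lt unfolding pv_def by fastforce
lemma tv_lt_q: "j < k \<Longrightarrow> i < 3 \<Longrightarrow> tv j i < q" using tv_lt unfolding qv_def by fastforce

lemma mk_S: assumes "j < k" "i < 3" shows "mk \<beta> {tv j i, c j} = c3 (i + off \<beta> j + rr \<beta> j)"
  using mk_pair[OF arcs_basic(1)[OF assms] tv_lt_c[OF assms]] assms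
  unfolding gg_def by (simp add: tv_div tv_mod)

lemma mk_B: assumes "j < k" "i < 3" shows "mk \<beta> {tv j i, up j i} = c3 (i + off \<beta> j)"
proof (cases j)
  case 0
  have k0: "0 < k" using k1 by simp
  then show ?thesis using mk_pair[OF arcs_basic(3)[OF assms(2)] tv_lt_p[OF k0 assms(2)]] assms 0
    unfolding gg_def up_def by (simp add: tv_mod off_0)
next
  case (Suc j')
  then have a: "(tv j' i, tv j i) \<in> parcs G" using arcs_basic(7)[of j' i] assms by simp
  have lt: "tv j' i < tv j i" using Suc assms unfolding tv_def by simp
  have ne: "tv j i \<noteq> p" "tv j i \<noteq> c j'" using assms by auto
  have "mk \<beta> {tv j i, up j i} = mk \<beta> {tv j' i, tv j i}" unfolding up_def using Suc by (simp add: insert_commute)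
  also have "\<dots> = gg \<beta> (tv j' i) (tv j i)" by (rule mk_pair[OF a lt])
  also have "\<dots> = c3 (i + off \<beta> j)" unfolding gg_def using ne Suc assms by (simp add: tv_div tv_mod)
  finally show ?thesis .
qed

lemma mk_A: assumes "j < k" "i < 3" shows "mk \<beta> {tv j i, dn j i} = c3 (i + off \<beta> (Suc j))"
proof (cases "Suc j = k")
  case True
  have ne: "q \<noteq> c j" "q \<noteq> p" using assms by auto
  have "j = k - 1" using True by simp
  then have a: "(tv j i, q) \<in> parcs G" using arcs_basic(5)[OF assms(2)] by simp
  show ?thesis using mk_pair[OF a tv_lt_q[OF assms]] ne True assms
    unfolding gg_def dn_def by (simp add: tv_div tv_mod)
next
  case False
  then have sj: "Suc j < k" using assms by simp
  have lt: "tv j i < tv (Suc j) i" unfolding tv_def by simp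
  have ne: "tv (Suc j) i \<noteq> p" "tv (Suc j) i \<noteq> c j" using assms sj by auto
  show ?thesis using mk_pair[OF arcs_basic(7)[OF sj assms(2)] lt] ne False assms
    unfolding gg_def dn_def by (simp add: tv_div tv_mod)
qed

lemma rr12: "rr \<beta> j = 1 \<or> rr \<beta> j = 2" unfolding rr_def by simp

lemma mk_COL: "mk \<beta> \<in> COL"
proof (rule colI)
  fix u v assume "(u,v) \<in> parcs G"
  then show "mk \<beta> {u,v} \<in> {1,2,3}" unfolding mk_def gg_def using c3_in uedgeI by auto
next
  fix e assume "e \<notin> uedges G" then show "mk \<beta> e = 0" unfolding mk_def by simp
next
  fix w x y assume wx: "(w,x) \<in> parcs G" and wy: "(w,y) \<in> parcs G" and xy: "x \<noteq> y"
  have wV: "w < nv k" using arc_in[OF wx] by simp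
  show "mk \<beta> {w,x} \<noteq> mk \<beta> {w,y}"
    using wV
  proof (cases rule: verts_cases)
    case (T j i)
    have vals: "z \<in> {c j, up j i, dn j i} \<Longrightarrow> mk \<beta> {w,z} \<in> {c3 (i + off \<beta> j + rr \<beta> j), c3 (i + off \<beta> j), c3 (i + off \<beta> j + 2 * rr \<beta> j)}" for z
      using mk_S[OF T(1,2)] mk_B[OF T(1,2)] mk_A[OF T(1,2)] T(3) off_Suc by (auto simp: add.assoc)
    have x: "x \<in> {c j, up j i, dn j i}" and y: "y \<in> {c j, up j i, dn j i}" using wx wy arc_tv'[OF T(1,2)] T(3) by auto
    let ?t = "i + off \<beta> j" let ?r = "rr \<beta> j"
    have d1: "c3 (?t + ?r) \<noteq> c3 ?t" "c3 (?t + 2 * ?r) \<noteq> c3 ?t" "c3 (?t + 2 * ?r) \<noteq> c3 (?t + ?r)"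
      unfolding c3_eq using rr12[of \<beta> j] by (auto, presburger+)
    have mS: "mk \<beta> {w, c j} = c3 (?t + ?r)" using mk_S[OF T(1,2)] T(3) by (simp add: add.assoc)
    have mB: "mk \<beta> {w, up j i} = c3 ?t" using mk_B[OF T(1,2)] T(3) by simp
    have mA: "mk \<beta> {w, dn j i} = c3 (?t + 2 * ?r)" using mk_A[OF T(1,2)] T(3) off_Suc by (simp add: add.assoc)
    show ?thesis using x y xy mS mB mA d1 by (auto simp del: c3_eq)
  next
    case (C j)
    obtain i1 where i1: "i1 < 3" "x = tv j i1" using arc_cv[OF C(1)] wx C(2) by blast
    obtain i2 where i2: "i2 < 3" "y = tv j i2" using arc_cv[OF C(1)] wy C(2) by blast
    have "i1 \<noteq> i2" using xy i1 i2 by auto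
    then have "c3 (i1 + off \<beta> j + rr \<beta> j) \<noteq> c3 (i2 + off \<beta> j + rr \<beta> j)" unfolding c3_eq using i1 i2 by presburger
    then show ?thesis using mk_S[OF C(1) i1(1)] mk_S[OF C(1) i2(1)] i1 i2 C(2) by (simp add: insert_commute)
  next
    case P
    obtain i1 where i1: "i1 < 3" "x = tv 0 i1" using arc_p wx P by blast
    obtain i2 where i2: "i2 < 3" "y = tv 0 i2" using arc_p wy P by blast
    have k0: "0 < k" using k1 by simp
    have "i1 \<noteq> i2" using xy i1 i2 by auto
    then have "c3 (i1 + off \<beta> 0) \<noteq> c3 (i2 + off \<beta> 0)" unfolding c3_eq off_0 using i1 i2 by simp
    then show ?thesis using mk_B[OF k0 i1(1)] mk_B[OF k0 i2(1)] i1 i2 P by (simp add: insert_commute up_def)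
  next
    case Q
    obtain i1 where i1: "i1 < 3" "x = tv (k-1) i1" using arc_q wx Q by blast
    obtain i2 where i2: "i2 < 3" "y = tv (k-1) i2" using arc_q wy Q by blast
    have km: "k - 1 < k" using k1 by simp
    have sk: "Suc (k-1) = k" using k1 by simp
    have "i1 \<noteq> i2" using xy i1 i2 by auto
    then have "c3 (i1 + off \<beta> (Suc (k-1))) \<noteq> c3 (i2 + off \<beta> (Suc (k-1)))" unfolding c3_eq using i1 i2 by presburger
    then show ?thesis using mk_A[OF km i1(1)] mk_A[OF km i2(1)] i1 i2 Q sk by (simp add: insert_commute dn_def)
  qed
qed

lemma cyc_c3: "cyc (c3 t) (c3 (t + r)) \<longleftrightarrow> r mod 3 = 1" if "r = 1 \<or> r = 2"
proof -
  have e: "(t + r) mod 3 = (t mod 3 + r) mod 3" by (simp add: mod_add_left_eq)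
  have "t mod 3 = 0 \<or> t mod 3 = 1 \<or> t mod 3 = 2" by presburger
  then show ?thesis using that unfolding cyc_def c3_def e by (elim disjE) simp_all
qed

lemma inv_mk: assumes "\<forall>j\<ge>k. \<not> \<beta> j" shows "inv (mk \<beta>) = \<beta>"
proof
  fix j
  have k0: "0 < k" using k1 by simp
  have o: "cyc (Bc (mk \<beta>) 0 0) (Bc (mk \<beta>) 0 1)" unfolding Bc_def using mk_B[OF k0, of 0] mk_B[OF k0, of 1]
    by (simp add: off_0 c3_def cyc_def)
  show "inv (mk \<beta>) j = \<beta> j"
  proof (cases "j < k")
    case True
    have "cyc (Bc (mk \<beta>) j 0) (Sc (mk \<beta>) j 0) \<longleftrightarrow> rr \<beta> j mod 3 = 1"
      unfolding Bc_def Sc_def using mk_B[OF True, of 0] mk_S[OF True, of 0] cyc_c3[OF rr12] by simp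
    also have "\<dots> \<longleftrightarrow> \<beta> j" unfolding rr_def by simp
    finally show ?thesis unfolding inv_def using True o by simp
  next
    case False then show ?thesis unfolding inv_def using assms by simp
  qed
qed

lemma card_quot: assumes "\<And>x. x \<in> A \<Longrightarrow> R `` {x} = {y \<in> A. f y = f x}"
  shows "card (A // R) = card (f ` A)"
proof -
  let ?F = "\<lambda>v. {y \<in> A. f y = v}"
  have "A // R = ?F ` (f ` A)" unfolding quotient_def using assms by auto
  moreover have "inj_on ?F (f ` A)"
  proof (rule inj_onI)
    fix v w assume "v \<in> f ` A" "w \<in> f ` A" "?F v = ?F w"
    then obtain x where "x \<in> A" "f x = v" by blast
    then have "x \<in> ?F w" using \<open>?F v = ?F w\<close> by blast
    then show "v = w" using \<open>f x = v\<close> by simp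
  qed
  ultimately show ?thesis by (simp add: card_image)
qed

definition BV :: "(nat \<Rightarrow> bool) set" where "BV = {\<beta>. \<forall>j\<ge>k. \<not> \<beta> j}"

lemma card_BV: "card BV = 2 ^ k"
proof -
  have "bij_betw (\<lambda>\<beta>. {j. \<beta> j}) BV (Pow {..<k})"
  proof (rule bij_betwI[where g = "\<lambda>S j. j \<in> S"])
    show "(\<lambda>\<beta>. {j. \<beta> j}) \<in> BV \<rightarrow> Pow {..<k}" unfolding BV_def by (auto, meson not_less)
    show "(\<lambda>S j. j \<in> S) \<in> Pow {..<k} \<rightarrow> BV" unfolding BV_def by auto
  qed auto
  then have "card BV = card (Pow {..<k::nat})" by (rule bij_betw_same_card)
  then show ?thesis by (simp add: card_Pow)
qed

lemma inv_range: "inv ` COL = BV"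
proof
  show "inv ` COL \<subseteq> BV" unfolding BV_def inv_def by auto
  show "BV \<subseteq> inv ` COL"
  proof
    fix \<beta> assume "\<beta> \<in> BV"
    then have "inv (mk \<beta>) = \<beta>" using inv_mk unfolding BV_def by blast
    then show "\<beta> \<in> inv ` COL" using mk_COL by (metis image_eqI)
  qed
qed

lemma count_G: "kempe_classes_count G = 2 ^ k"
proof -
  have "kempe_classes_count G = card (COL // Rk)" unfolding kempe_classes_count_def ..
  also have "\<dots> = card (inv ` COL)" by (rule card_quot) (rule class_eq)
  also have "\<dots> = 2 ^ k" unfolding inv_range card_BV ..
  finally show ?thesis .
qed

end


theorem theorem22:
  fixes k :: nat
  assumes "k \<ge> 1"
  shows "\<exists>G :: nat pair_pre_digraph.
           pair_graph G \<and> k_connected 3 G \<and> \<not> kuratowski_planar (with_proj G) \<and>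
           bipartite G \<and> cubic G \<and> card (pverts G) = 4 * k + 2 \<and>
           kempe_classes_count G = 2 ^ k"
proof -
  interpret L k using assms by unfold_locales
  have "pair_graph (GG k) \<and> k_connected 3 (GG k) \<and> \<not> kuratowski_planar (with_proj (GG k)) \<and>
           bipartite (GG k) \<and> cubic (GG k) \<and> card (pverts (GG k)) = 4 * k + 2 \<and>
           kempe_classes_count (GG k) = 2 ^ k"
    using pair_graph_G conn_G nonplanar_G bipartite_G cubic_G card_G count_G by blast
  then show ?thesis by blast
qed

end
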